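(* Let $p=0$, $0<q<1$, $0<\theta<1$ and $\varepsilon>0$. For $d>0$ and $\alpha\in(q,\ e^{-d}+(1-e^{-d})q)$ let \[ b_1(\alpha,d)=\frac{\theta}{1-\theta}\frac{1}{d\,D_{\mathrm{KL}}(\alpha\|q)},\qquad b_2(\alpha,d)=\frac{1}{1-\theta}\frac{1}{d\,D_{\mathrm{KL}}\big(\alpha\|e^{-d}+(1-e^{-d})q\big)}, \] and $m_{\mathrm{COMP},Z}=\min_{\alpha,d}\max\{b_1(\alpha,d),b_2(\alpha,d)\}\,k\log(n/k)$. If $m>(1+\varepsilon)m_{\mathrm{COMP},Z}$, then (with $d,\alpha$ chosen suitably) noisy COMP recovers $\sigma$ with high probability given $G$ and $\hat\sigma$.
   Context: Noisy group testing model (Z channel): $n$ individuals, $k\sim n^{\theta}$ infected; $\sigma\in\{0,1\}^n$ uniformly random of Hamming weight $k$. Constant-column design $G$: $m=ck\log(n/k)$ tests, each individual independently assigned to exactly $\Delta=cd\log(n/k)$ distinct tests chosen uniformly at random. A test is truly positive iff it contains an infected individual. Displayed results $\hat\sigma$: independently, a truly negative test is displayed positive with probability $p$ (here $p=0$), a truly positive test is displayed negative with probability $q$. Noisy COMP with threshold $\alpha$: declare healthy every individual appearing in at least $\alpha\Delta$ displayed negative tests, the rest infected. $\log$ natural; $D_{\mathrm{KL}}(r\|s)=r\log(r/s)+(1-r)\log\frac{1-r}{1-s}$. "With high probability": probability $\to1$ as $n\to\infty$. *)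

theory Defs
  imports "HOL-Probability.Probability" "HOL-Library.Landau_Symbols"
begin

definition DKL :: "real \<Rightarrow> real \<Rightarrow> real" where
  "DKL r s = r * ln (r / s) + (1 - r) * ln ((1 - r) / (1 - s))"

definition b1 :: "real \<Rightarrow> real \<Rightarrow> real \<Rightarrow> real \<Rightarrow> real" where
  "b1 \<theta> q \<alpha> d = \<theta> / (1 - \<theta>) * (1 / (d * DKL \<alpha> q))"

definition b2 :: "real \<Rightarrow> real \<Rightarrow> real \<Rightarrow> real \<Rightarrow> real" where
  "b2 \<theta> q \<alpha> d = 1 / (1 - \<theta>) * (1 / (d * DKL \<alpha> (exp (- d) + (1 - exp (- d)) * q)))"

definition admissible :: "real \<Rightarrow> real \<Rightarrow> real \<Rightarrow> bool" where
  "admissible q \<alpha> d \<longleftrightarrow> d > 0 \<and> q < \<alpha> \<and> \<alpha> < exp (- d) + (1 - exp (- d)) * q"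

text \<open>The constant in front of k log(n/k) in m_COMP,Z (min over alpha, d, taken as infimum).\<close>
definition mCOMP_coeff :: "real \<Rightarrow> real \<Rightarrow> real" where
  "mCOMP_coeff \<theta> q = Inf {max (b1 \<theta> q \<alpha> d) (b2 \<theta> q \<alpha> d) | \<alpha> d. admissible q \<alpha> d}"

text \<open>Test a is displayed negative: with p = 0, a truly negative test is always displayed
  negative; a truly positive test is displayed negative iff its flip bit F a is set
  (which happens independently with probability q).\<close>
definition displayed_neg :: "nat set \<Rightarrow> (nat \<Rightarrow> nat set) \<Rightarrow> (nat \<Rightarrow> bool) \<Rightarrow> nat \<Rightarrow> bool" where
  "displayed_neg S G F a \<longleftrightarrow> (\<forall>i\<in>S. a \<notin> G i) \<or> F a"

definition noisy_COMP :: "nat \<Rightarrow> nat \<Rightarrow> real \<Rightarrow> nat set \<Rightarrow> (nat \<Rightarrow> nat set) \<Rightarrow> (nat \<Rightarrow> bool) \<Rightarrow> nat set" where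
  "noisy_COMP n \<Delta> \<alpha> S G F =
     {i. i < n \<and> \<not> (real (card {a \<in> G i. displayed_neg S G F a}) \<ge> \<alpha> * real \<Delta>)}"

text \<open>Joint law: sigma uniform among k-subsets of the n individuals; constant-column design
  (each individual independently picks Delta distinct tests among m uniformly);
  independent Z-channel flips with probability q per test.\<close>
definition gt_space :: "nat \<Rightarrow> nat \<Rightarrow> nat \<Rightarrow> nat \<Rightarrow> real \<Rightarrow>
    (nat set \<times> (nat \<Rightarrow> nat set) \<times> (nat \<Rightarrow> bool)) pmf" where
  "gt_space n k m \<Delta> q =
     pair_pmf (pmf_of_set {S. S \<subseteq> {..<n} \<and> card S = k})
       (pair_pmf (Pi_pmf {..<n} {} (\<lambda>_. pmf_of_set {T. T \<subseteq> {..<m} \<and> card T = \<Delta>}))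
                 (Pi_pmf {..<m} False (\<lambda>_. bernoulli_pmf q)))"

definition success_prob :: "nat \<Rightarrow> nat \<Rightarrow> nat \<Rightarrow> nat \<Rightarrow> real \<Rightarrow> real \<Rightarrow> real" where
  "success_prob n k m \<Delta> q \<alpha> =
     measure_pmf.prob (gt_space n k m \<Delta> q) {(S, G, F). noisy_COMP n \<Delta> \<alpha> S G F = S}"

end

theory Submission
  imports Defs
begin
lemma sub_split:
  assumes "a \<in> M" "finite M"
  shows "{T. T \<subseteq> M \<and> card T = Suc D} =
         {T. T \<subseteq> M - {a} \<and> card T = Suc D} \<union> insert a ` {T. T \<subseteq> M - {a} \<and> card T = D}"
  (is "?L = ?A \<union> ?B")
proof (intro equalityI subsetI)
  fix T assume T: "T \<in> ?L"
  then have TM: "T \<subseteq> M" and cT: "card T = Suc D" by auto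
  show "T \<in> ?A \<union> ?B"
  proof (cases "a \<in> T")
    case True
    have fT: "finite T" using TM assms(2) by (rule finite_subset)
    have "card (T - {a}) = D" using card_Diff_singleton[OF True] cT by simp
    moreover have "T - {a} \<subseteq> M - {a}" using TM by blast
    ultimately have "T - {a} \<in> {T. T \<subseteq> M - {a} \<and> card T = D}" by blast
    moreover have "T = insert a (T - {a})" using True by blast
    ultimately have "T \<in> ?B" by blast
    then show ?thesis by blast
  next
    case False
    then have "T \<subseteq> M - {a}" using TM by blast
    then have "T \<in> ?A" using cT by blast
    then show ?thesis by blast
  qed
next
  fix T assume "T \<in> ?A \<union> ?B"
  then show "T \<in> ?L"
  proof
    assume "T \<in> ?A" then show ?thesis by blast
  next
    assume "T \<in> ?B"
    then obtain T' where T': "T' \<subseteq> M - {a}" "card T' = D" "T = insert a T'" by blast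
    have fT': "finite T'" using T'(1) assms(2) finite_subset by blast
    have "a \<notin> T'" using T'(1) by blast
    then have "card T = Suc D" using T' fT' by simp
    moreover have "T \<subseteq> M" using T' assms(1) by blast
    ultimately show ?thesis by blast
  qed
qed

lemma aux_lin:
  fixes C t X Y \<sigma> :: real
  assumes "C * t = X" "C = X + Y"
  shows "C * (\<sigma> + (1 - \<sigma>) * t) = \<sigma> * Y + X"
proof -
  have "C * (\<sigma> + (1 - \<sigma>) * t) = \<sigma> * C + (1 - \<sigma>) * (C * t)" by (simp add: algebra_simps)
  also have "\<dots> = \<sigma> * (X + Y) + (1 - \<sigma>) * X"
    by (unfold assms(1), unfold assms(2), rule refl)
  also have "\<dots> = \<sigma> * Y + X" by (simp add: algebra_simps)
  finally show ?thesis .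
qed

lemma occ_sum_bound:
  fixes \<sigma> :: real
  assumes "finite M" "U \<subseteq> M" "card U < card M" "0 \<le> \<sigma>" "\<sigma> \<le> 1"
  shows "(\<Sum>T\<in>{T. T \<subseteq> M \<and> card T = D}. \<sigma> ^ card (U - T))
          \<le> real (card M choose D) * (\<sigma> + (1 - \<sigma>) * D / real (card M - card U)) ^ card U"
proof -
  have "finite U" using assms finite_subset by blast
  then show ?thesis using assms
  proof (induction U arbitrary: M D rule: finite_induct)
    case (empty M D)
    have "(\<Sum>T\<in>{T. T \<subseteq> M \<and> card T = D}. \<sigma> ^ card ({} - T)) = real (card {T. T \<subseteq> M \<and> card T = D})"
      by simp
    also have "\<dots> = real (card M choose D)" using n_subsets[OF empty(1)] by simp
    finally show ?case by simp
  next
    case (insert a U M D)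
    define M' where "M' = M - {a}"
    have aM: "a \<in> M" using insert(5) by auto
    have fM': "finite M'" using insert(4) M'_def by auto
    have cM: "card M = Suc (card M')" unfolding M'_def using card_Suc_Diff1[OF insert(4) aM] by simp
    have UM': "U \<subseteq> M'" using insert(2,5) M'_def by auto
    have cU: "card (insert a U) = Suc (card U)" using insert(1,2) by simp
    have cUM': "card U < card M'" using insert(6) cM cU by simp
    have pos: "real (card M' - card U) > 0" using cUM' by simp
    have eqd: "card M - card (insert a U) = card M' - card U" using cM cU by simp
    have eqd': "card M - Suc (card U) = card M' - card U" using cM by simp
    show ?case
    proof (cases D)
      case 0
      have "{T. T \<subseteq> M \<and> card T = 0} = {{}}"
      proof (intro equalityI subsetI)
        fix T assume "T \<in> {T. T \<subseteq> M \<and> card T = 0}"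
        then have "T \<subseteq> M" "card T = 0" by auto
        then have "finite T" using insert(4) finite_subset by blast
        then show "T \<in> {{}}" using \<open>card T = 0\<close> by simp
      qed auto
      then show ?thesis using 0 by simp
    next
      case (Suc D')
      define x1 where "x1 = \<sigma> + (1 - \<sigma>) * real (Suc D') / real (card M' - card U)"
      define x0 where "x0 = \<sigma> + (1 - \<sigma>) * real D' / real (card M' - card U)"
      have x01: "x0 \<le> x1" unfolding x0_def x1_def using insert(8) pos
        by (intro add_left_mono mult_left_mono divide_right_mono) auto
      have x0nn: "0 \<le> x0" unfolding x0_def using insert(7,8) pos by auto
      have IH1: "(\<Sum>T\<in>{T. T \<subseteq> M' \<and> card T = Suc D'}. \<sigma> ^ card (U - T))
          \<le> real (card M' choose Suc D') * x1 ^ card U"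
        unfolding x1_def by (rule insert.IH[OF fM' UM' cUM' insert(7,8)])
      have IH0: "(\<Sum>T\<in>{T. T \<subseteq> M' \<and> card T = D'}. \<sigma> ^ card (U - T))
          \<le> real (card M' choose D') * x1 ^ card U"
      proof -
        have "(\<Sum>T\<in>{T. T \<subseteq> M' \<and> card T = D'}. \<sigma> ^ card (U - T))
          \<le> real (card M' choose D') * x0 ^ card U"
          unfolding x0_def by (rule insert.IH[OF fM' UM' cUM' insert(7,8)])
        also have "\<dots> \<le> real (card M' choose D') * x1 ^ card U"
          by (intro mult_left_mono power_mono x01 x0nn) auto
        finally show ?thesis .
      qed
      have split: "{T. T \<subseteq> M \<and> card T = Suc D'} =
         {T. T \<subseteq> M' \<and> card T = Suc D'} \<union> insert a ` {T. T \<subseteq> M' \<and> card T = D'}"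
        unfolding M'_def by (rule sub_split[OF aM insert(4)])
      have fin1: "finite {T. T \<subseteq> M' \<and> card T = Suc D'}" using fM' by auto
      have fin2: "finite {T. T \<subseteq> M' \<and> card T = D'}" using fM' by auto
      have disj: "{T. T \<subseteq> M' \<and> card T = Suc D'} \<inter> insert a ` {T. T \<subseteq> M' \<and> card T = D'} = {}"
        unfolding M'_def by auto
      have inj: "inj_on (insert a) {T. T \<subseteq> M' \<and> card T = D'}"
        unfolding M'_def inj_on_def by blast
      have s1: "(\<Sum>T\<in>{T. T \<subseteq> M \<and> card T = D}. \<sigma> ^ card (insert a U - T))
         = (\<Sum>T\<in>{T. T \<subseteq> M' \<and> card T = Suc D'}. \<sigma> ^ card (insert a U - T))
           + (\<Sum>T\<in>{T. T \<subseteq> M' \<and> card T = D'}. \<sigma> ^ card (insert a U - insert a T))"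
        unfolding Suc split using fin1 fin2 disj inj
        by (simp add: sum.union_disjoint sum.reindex)
      have s2: "(\<Sum>T\<in>{T. T \<subseteq> M' \<and> card T = Suc D'}. \<sigma> ^ card (insert a U - T))
           = \<sigma> * (\<Sum>T\<in>{T. T \<subseteq> M' \<and> card T = Suc D'}. \<sigma> ^ card (U - T))"
      proof -
        have "\<And>T. T \<subseteq> M' \<Longrightarrow> card (insert a U - T) = Suc (card (U - T))"
        proof -
          fix T assume "T \<subseteq> M'"
          then have "insert a U - T = insert a (U - T)" "a \<notin> U - T" using M'_def insert(2) by auto
          then show "card (insert a U - T) = Suc (card (U - T))" using insert(1) by simp
        qed
        then show ?thesis by (simp add: sum_distrib_left)
      qed
      have s3: "(\<Sum>T\<in>{T. T \<subseteq> M' \<and> card T = D'}. \<sigma> ^ card (insert a U - insert a T))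
           = (\<Sum>T\<in>{T. T \<subseteq> M' \<and> card T = D'}. \<sigma> ^ card (U - T))"
      proof -
        have "\<And>T. insert a U - insert a T = U - T" using insert(2) by auto
        then show ?thesis by simp
      qed
      have "(\<Sum>T\<in>{T. T \<subseteq> M \<and> card T = D}. \<sigma> ^ card (insert a U - T))
         = \<sigma> * (\<Sum>T\<in>{T. T \<subseteq> M' \<and> card T = Suc D'}. \<sigma> ^ card (U - T))
           + (\<Sum>T\<in>{T. T \<subseteq> M' \<and> card T = D'}. \<sigma> ^ card (U - T))"
        unfolding s1 s2 s3 by (rule refl)
      also have "\<sigma> * (\<Sum>T\<in>{T. T \<subseteq> M' \<and> card T = Suc D'}. \<sigma> ^ card (U - T))
           + (\<Sum>T\<in>{T. T \<subseteq> M' \<and> card T = D'}. \<sigma> ^ card (U - T))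
         \<le> \<sigma> * (real (card M' choose Suc D') * x1 ^ card U) + real (card M' choose D') * x1 ^ card U"
        using IH1 IH0 insert(7) by (intro add_mono mult_left_mono) auto
      also have "\<dots> = (\<sigma> * real (card M' choose Suc D') + real (card M' choose D')) * x1 ^ card U"
        by (simp add: algebra_simps)
      also have "\<dots> \<le> real (card M choose D) * x1 * x1 ^ card U"
      proof (intro mult_right_mono)
        show "0 \<le> x1 ^ card U" using x0nn x01 by simp
        have A: "real (Suc D') * real (card M choose D) = real (card M) * real (card M' choose D')"
          using Suc_times_binomial[of D' "card M'"] cM Suc by (metis of_nat_mult)
        have B: "real (card M choose D) = real (card M' choose D') + real (card M' choose Suc D')"
          using cM Suc by simp
        have mpos: "real (card M) > 0" using cM by simp
        have le: "real (card M' - card U) \<le> real (card M)" using cM by simp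
        have dl: "real (Suc D') / real (card M) \<le> real (Suc D') / real (card M' - card U)"
          using pos le by (intro divide_left_mono) auto
        have "\<sigma> + (1 - \<sigma>) * (real (Suc D') / real (card M)) \<le> x1"
          unfolding x1_def using mult_left_mono[OF dl, of "1-\<sigma>"] insert(8) by simp
        then have "real (card M choose D) * (\<sigma> + (1 - \<sigma>) * (real (Suc D') / real (card M)))
            \<le> real (card M choose D) * x1" by (intro mult_left_mono) auto
        moreover have "real (card M choose D) * (\<sigma> + (1 - \<sigma>) * (real (Suc D') / real (card M)))
            = \<sigma> * real (card M' choose Suc D') + real (card M' choose D')"
        proof -
          have "real (card M choose D) * (real (Suc D') / real (card M)) = real (card M' choose D')"
            using A mpos by (simp add: field_simps)
          then show ?thesis using B by (rule aux_lin)
        qed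
        ultimately show "\<sigma> * real (card M' choose Suc D') + real (card M' choose D') \<le> real (card M choose D) * x1"
          by simp
      qed
      also have "\<dots> = real (card M choose D) * (\<sigma> + (1 - \<sigma>) * real D / real (card M - card (insert a U))) ^ card (insert a U)"
        unfolding cU power_Suc Suc x1_def eqd' by (rule mult.assoc)
      finally show ?thesis .
    qed
  qed
qed


definition unif :: "nat \<Rightarrow> nat \<Rightarrow> nat set pmf" where
  "unif m D = pmf_of_set {T. T \<subseteq> {..<m} \<and> card T = D}"

lemma sub_ne: "D \<le> m \<Longrightarrow> {T. T \<subseteq> {..<m::nat} \<and> card T = D} \<noteq> {}"
  by (rule ex_in_conv[THEN iffD1], rule exI[of _ "{..<D}"]) auto

lemma sub_fin: "finite {T. T \<subseteq> {..<m::nat} \<and> card T = D}" 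
  by (rule finite_subset[of _ "Pow {..<m}"]) auto

lemma set_unif: "D \<le> m \<Longrightarrow> set_pmf (unif m D) = {T. T \<subseteq> {..<m} \<and> card T = D}"
  unfolding unif_def by (rule set_pmf_of_set[OF sub_ne sub_fin])

lemma single_occ:
  fixes \<sigma> :: real
  assumes "U \<subseteq> {..<m}" "card U \<le> D" "2 * D < m" "0 \<le> \<sigma>" "\<sigma> \<le> 1"
  shows "(\<integral>\<^sup>+ T. ennreal (\<sigma> ^ card (U - T)) \<partial>unif m D)
           \<le> ennreal ((\<sigma> + (1 - \<sigma>) * (real D / real (m - D))) ^ card U)"
proof -
  let ?S = "{T. T \<subseteq> {..<m} \<and> card T = D}"
  have ne: "?S \<noteq> {}" using sub_ne assms(3) by simp
  have cS: "card ?S = m choose D" using n_subsets[of "{..<m}" D] by simp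
  have cpos: "real (m choose D) > 0" using assms(3) by simp
  have "(\<integral>\<^sup>+ T. ennreal (\<sigma> ^ card (U - T)) \<partial>unif m D)
        = (\<Sum>T\<in>?S. ennreal (\<sigma> ^ card (U - T))) / card ?S"
    unfolding unif_def by (rule nn_integral_pmf_of_set[OF ne sub_fin])
  also have "\<dots> = ennreal ((\<Sum>T\<in>?S. \<sigma> ^ card (U - T)) / real (m choose D))"
  proof -
    have "(\<Sum>T\<in>?S. ennreal (\<sigma> ^ card (U - T))) = ennreal (\<Sum>T\<in>?S. \<sigma> ^ card (U - T))"
      by (rule sum_ennreal) (simp add: assms(4))
    moreover have "(of_nat (card ?S) :: ennreal) = ennreal (real (m choose D))"
      unfolding cS by (rule ennreal_of_nat_eq_real_of_nat)
    moreover have "0 \<le> (\<Sum>T\<in>?S. \<sigma> ^ card (U - T))" by (intro sum_nonneg) (simp add: assms(4))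
    ultimately show ?thesis using cpos by (simp add: divide_ennreal)
  qed
  also have "\<dots> \<le> ennreal ((\<sigma> + (1 - \<sigma>) * (real D / real (m - D))) ^ card U)"
  proof (rule ennreal_leI)
    have cU: "card U < card {..<m}" using assms by simp
    have "(\<Sum>T\<in>?S. \<sigma> ^ card (U - T))
          \<le> real (m choose D) * (\<sigma> + (1 - \<sigma>) * D / real (m - card U)) ^ card U"
      using occ_sum_bound[OF _ assms(1) cU assms(4,5), of D] by simp
    also have "\<dots> \<le> real (m choose D) * (\<sigma> + (1 - \<sigma>) * (real D / real (m - D))) ^ card U"
    proof (intro mult_left_mono power_mono)
      have "real D / real (m - card U) \<le> real D / real (m - D)"
        using assms by (intro divide_left_mono) auto
      then have "(1 - \<sigma>) * (real D / real (m - card U)) \<le> (1 - \<sigma>) * (real D / real (m - D))"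
        using assms(5) by (intro mult_left_mono) auto
      then show "\<sigma> + (1 - \<sigma>) * real D / real (m - card U) \<le> \<sigma> + (1 - \<sigma>) * (real D / real (m - D))"
        by simp
      show "0 \<le> \<sigma> + (1 - \<sigma>) * real D / real (m - card U)" using assms(4,5) by simp
    qed simp
    finally show "(\<Sum>T\<in>?S. \<sigma> ^ card (U - T)) / real (m choose D)
        \<le> (\<sigma> + (1 - \<sigma>) * (real D / real (m - D))) ^ card U"
      using cpos by (simp add: divide_le_eq mult.commute)
  qed
  finally show ?thesis .
qed

lemma nn_pair_swap:
  "(\<integral>\<^sup>+ z. h z \<partial>pair_pmf A B) = (\<integral>\<^sup>+ b. \<integral>\<^sup>+ a. h (a, b) \<partial>A \<partial>B)"
proof -
  have "(\<integral>\<^sup>+ z. h z \<partial>pair_pmf A B) = (\<integral>\<^sup>+ z. h z \<partial>map_pmf (\<lambda>(x, y). (y, x)) (pair_pmf B A))"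
    by (subst pair_commute_pmf) (rule refl)
  also have "\<dots> = (\<integral>\<^sup>+ z. h (snd z, fst z) \<partial>pair_pmf B A)"
    by (simp add: case_prod_unfold)
  also have "\<dots> = (\<integral>\<^sup>+ b. \<integral>\<^sup>+ a. h (a, b) \<partial>A \<partial>B)"
    by (simp add: nn_integral_pair_pmf')
  finally show ?thesis .
qed

lemma nn_bound_pmf:
  assumes "\<And>x. x \<in> set_pmf M \<Longrightarrow> f x \<le> g x"
  shows "(\<integral>\<^sup>+ x. f x \<partial>M) \<le> (\<integral>\<^sup>+ x. g x \<partial>M)"
  by (rule nn_integral_mono_AE) (use assms in \<open>auto simp: AE_measure_pmf_iff\<close>)

lemma multi_occ:
  fixes \<sigma> :: real
  assumes "finite S" "U \<subseteq> {..<m}" "card U \<le> D" "2 * D < m" "0 \<le> \<sigma>" "\<sigma> \<le> 1"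
  shows "(\<integral>\<^sup>+ G. ennreal (\<sigma> ^ card (U - (\<Union>j\<in>S. G j))) \<partial>Pi_pmf S {} (\<lambda>_. unif m D))
          \<le> ennreal ((1 - (1 - \<sigma>) * (1 - real D / real (m - D)) ^ card S) ^ card U)"
  using assms(1,2,3,5,6)
proof (induction S arbitrary: \<sigma> U rule: finite_induct)
  case empty
  then show ?case by simp
next
  case (insert x S \<sigma> U)
  define \<delta> where "\<delta> = real D / real (m - D)"
  define g where "g = \<sigma> + (1 - \<sigma>) * \<delta>"
  have d0: "0 \<le> \<delta>" unfolding \<delta>_def by simp
  have d1: "\<delta> \<le> 1" unfolding \<delta>_def using assms(4) by (simp add: divide_le_eq)
  have g0: "0 \<le> g" unfolding g_def using insert(6,7) d0 by simp
  have g1: "g \<le> 1" unfolding g_def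
  proof -
    have "(1 - \<sigma>) * \<delta> \<le> (1 - \<sigma>) * 1" using d1 insert(7) by (intro mult_left_mono) auto
    then show "\<sigma> + (1 - \<sigma>) * \<delta> \<le> 1" by simp
  qed
  let ?P = "\<lambda>_. unif m D"
  let ?h = "\<lambda>G. ennreal (\<sigma> ^ card (U - (\<Union>j\<in>insert x S. G j)))"
  have "(\<integral>\<^sup>+ G. ?h G \<partial>Pi_pmf (insert x S) {} ?P)
      = (\<integral>\<^sup>+ z. ?h ((\<lambda>(y, f). f(x := y)) z) \<partial>pair_pmf (unif m D) (Pi_pmf S {} ?P))"
    by (simp add: Pi_pmf_insert[OF insert(1,2)])
  also have "\<dots> = (\<integral>\<^sup>+ f. \<integral>\<^sup>+ y. ?h (f(x := y)) \<partial>unif m D \<partial>Pi_pmf S {} ?P)"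
    by (subst nn_pair_swap) simp
  also have "\<dots> \<le> (\<integral>\<^sup>+ f. ennreal (g ^ card (U - (\<Union>j\<in>S. f j))) \<partial>Pi_pmf S {} ?P)"
  proof (rule nn_bound_pmf)
    fix f
    have eqU: "\<And>y. U - (\<Union>j\<in>insert x S. (f(x := y)) j) = (U - (\<Union>j\<in>S. f j)) - y"
      using insert(2) by auto
    have "(\<integral>\<^sup>+ y. ?h (f(x := y)) \<partial>unif m D) = (\<integral>\<^sup>+ y. ennreal (\<sigma> ^ card ((U - (\<Union>j\<in>S. f j)) - y)) \<partial>unif m D)"
      by (simp only: eqU)
    also have "\<dots> \<le> ennreal ((\<sigma> + (1 - \<sigma>) * (real D / real (m - D))) ^ card (U - (\<Union>j\<in>S. f j)))"
    proof (rule single_occ)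
      show "U - (\<Union>j\<in>S. f j) \<subseteq> {..<m}" using insert(4) by blast
      have "card (U - (\<Union>j\<in>S. f j)) \<le> card U"
        using insert(4) by (intro card_mono) (auto intro: finite_subset)
      then show "card (U - (\<Union>j\<in>S. f j)) \<le> D" using insert(5) by simp
    qed (use assms(4) insert(6,7) in auto)
    finally show "(\<integral>\<^sup>+ y. ?h (f(x := y)) \<partial>unif m D) \<le> ennreal (g ^ card (U - (\<Union>j\<in>S. f j)))"
      unfolding g_def \<delta>_def .
  qed
  also have "\<dots> \<le> ennreal ((1 - (1 - g) * (1 - real D / real (m - D)) ^ card S) ^ card U)"
    by (rule insert.IH[OF insert(4,5) g0 g1])
  also have "(1 - g) * (1 - real D / real (m - D)) ^ card S = (1 - \<sigma>) * (1 - real D / real (m - D)) ^ card (insert x S)"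
    using insert(1,2) unfolding g_def \<delta>_def by (simp add: algebra_simps)
  finally show ?case .
qed

lemma markov_pmf:
  assumes "\<And>x. x \<in> A \<Longrightarrow> 1 \<le> u x" "\<And>x. 0 \<le> u x"
  shows "emeasure (measure_pmf M) A \<le> (\<integral>\<^sup>+ x. ennreal (u x) \<partial>M)"
proof -
  have "emeasure (measure_pmf M) A = (\<integral>\<^sup>+ x. indicator A x \<partial>M)" by simp
  also have "\<dots> \<le> (\<integral>\<^sup>+ x. ennreal (u x) \<partial>M)"
  proof (rule nn_integral_mono)
    fix x show "indicator A x \<le> ennreal (u x)"
      using assms[of x] by (cases "x \<in> A") auto
  qed
  finally show ?thesis .
qed

lemma Cprod:
  fixes \<phi> :: "nat \<Rightarrow> bool \<Rightarrow> real"
  assumes "T \<subseteq> {..<m}" "\<And>a v. 0 \<le> \<phi> a v" "0 \<le> q" "q \<le> 1"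
  shows "(\<integral>\<^sup>+ F. ennreal (\<Prod>a\<in>T. \<phi> a (F a)) \<partial>Pi_pmf {..<m} False (\<lambda>_. bernoulli_pmf q))
         = ennreal (\<Prod>a\<in>T. \<phi> a True * q + \<phi> a False * (1 - q))"
proof -
  have fT: "finite T" using assms(1) finite_subset by blast
  have e1: "\<And>F. (\<Prod>a\<in>T. \<phi> a (F a)) = (\<Prod>a\<in>{..<m}. (if a \<in> T then \<phi> a (F a) else 1))"
    using assms(1) by (simp add: prod.If_cases Int_absorb1)
  have "(\<integral>\<^sup>+ F. ennreal (\<Prod>a\<in>T. \<phi> a (F a)) \<partial>Pi_pmf {..<m} False (\<lambda>_. bernoulli_pmf q))
      = (\<integral>\<^sup>+ F. (\<Prod>a\<in>{..<m}. ennreal (if a \<in> T then \<phi> a (F a) else 1)) \<partial>Pi_pmf {..<m} False (\<lambda>_. bernoulli_pmf q))"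
    unfolding e1 using assms(2) by (subst prod_ennreal) auto
  also have "\<dots> = (\<Prod>a\<in>{..<m}. \<integral>\<^sup>+ v. ennreal (if a \<in> T then \<phi> a v else 1) \<partial>bernoulli_pmf q)"
    by (rule nn_integral_prod_Pi_pmf) simp
  also have "\<dots> = (\<Prod>a\<in>{..<m}. ennreal (if a \<in> T then \<phi> a True * q + \<phi> a False * (1 - q) else 1))"
  proof (rule prod.cong[OF refl])
    fix a
    show "(\<integral>\<^sup>+ v. ennreal (if a \<in> T then \<phi> a v else 1) \<partial>bernoulli_pmf q)
        = ennreal (if a \<in> T then \<phi> a True * q + \<phi> a False * (1 - q) else 1)"
      using assms(2,3,4) by (simp add: ennreal_mult' ennreal_plus[symmetric] mult_nonneg_nonneg)
  qed
  also have "\<dots> = ennreal (\<Prod>a\<in>{..<m}. (if a \<in> T then \<phi> a True * q + \<phi> a False * (1 - q) else 1))"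
    using assms(2,3,4) by (subst prod_ennreal) auto
  also have "(\<Prod>a\<in>{..<m}. (if a \<in> T then \<phi> a True * q + \<phi> a False * (1 - q) else 1))
      = (\<Prod>a\<in>T. \<phi> a True * q + \<phi> a False * (1 - q))"
    using assms(1) by (simp add: prod.If_cases Int_absorb1)
  finally show ?thesis .
qed

lemma Cprod_c:
  fixes \<phi> :: "nat \<Rightarrow> bool \<Rightarrow> real"
  assumes "T \<subseteq> {..<m}" "\<And>a v. 0 \<le> \<phi> a v" "0 \<le> q" "q \<le> 1" "0 \<le> c"
  shows "(\<integral>\<^sup>+ F. ennreal (c * (\<Prod>a\<in>T. \<phi> a (F a))) \<partial>Pi_pmf {..<m} False (\<lambda>_. bernoulli_pmf q))
         = ennreal (c * (\<Prod>a\<in>T. \<phi> a True * q + \<phi> a False * (1 - q)))"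
proof -
  have "(\<integral>\<^sup>+ F. ennreal (c * (\<Prod>a\<in>T. \<phi> a (F a))) \<partial>Pi_pmf {..<m} False (\<lambda>_. bernoulli_pmf q))
      = (\<integral>\<^sup>+ F. ennreal c * ennreal (\<Prod>a\<in>T. \<phi> a (F a)) \<partial>Pi_pmf {..<m} False (\<lambda>_. bernoulli_pmf q))"
    using assms(5) by (simp add: ennreal_mult')
  also have "\<dots> = ennreal c * (\<integral>\<^sup>+ F. ennreal (\<Prod>a\<in>T. \<phi> a (F a)) \<partial>Pi_pmf {..<m} False (\<lambda>_. bernoulli_pmf q))"
    by (rule nn_integral_cmult) simp
  also have "\<dots> = ennreal c * ennreal (\<Prod>a\<in>T. \<phi> a True * q + \<phi> a False * (1 - q))"
    by (subst Cprod[OF assms(1-4)]) (rule refl)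
  also have "\<dots> = ennreal (c * (\<Prod>a\<in>T. \<phi> a True * q + \<phi> a False * (1 - q)))"
    using assms(5) by (simp add: ennreal_mult')
  finally show ?thesis .
qed

lemma PG_support:
  fixes n m D i :: nat
  assumes "G \<in> set_pmf (Pi_pmf {..<n} {} (\<lambda>_. unif m D))" "i < n" "D \<le> m"
  shows "G i \<subseteq> {..<m}" "card (G i) = D"
proof -
  have eq: "set_pmf (Pi_pmf {..<n} {} (\<lambda>_. unif m D)) = PiE_dflt {..<n} {} (set_pmf \<circ> (\<lambda>_. unif m D))"
    by (rule set_Pi_pmf) simp
  have "G \<in> PiE_dflt {..<n} {} (set_pmf \<circ> (\<lambda>_. unif m D))"
    using assms(1) unfolding eq .
  then have "G i \<in> set_pmf (unif m D)" using assms(2) unfolding PiE_dflt_def by auto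
  then show "G i \<subseteq> {..<m}" "card (G i) = D" using set_unif[OF assms(3)] by auto
qed

lemma infected_bound:
  fixes S :: "nat set" and l \<alpha> q :: real and n m D i :: nat
  assumes "i \<in> S" "i < n" "D \<le> m" "0 \<le> q" "q \<le> 1" "0 \<le> l"
  shows "emeasure (pair_pmf (Pi_pmf {..<n} {} (\<lambda>_. unif m D)) (Pi_pmf {..<m} False (\<lambda>_. bernoulli_pmf q)))
     {(G, F). \<alpha> * real D \<le> real (card {a \<in> G i. displayed_neg S G F a})}
   \<le> ennreal ((exp (- l * \<alpha>) * (1 - q + q * exp l)) ^ D)"
proof -
  let ?PG = "Pi_pmf {..<n} {} (\<lambda>_. unif m D)"
  let ?PF = "Pi_pmf {..<m} False (\<lambda>_. bernoulli_pmf q)"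
  define u where "u = (\<lambda>(G::nat \<Rightarrow> nat set, F::nat \<Rightarrow> bool).
      exp (- l * \<alpha> * real D) * (\<Prod>a\<in>G i. (if F a then exp l else 1)))"
  have dn: "\<And>G F. {a \<in> G i. displayed_neg S G F a} = {a \<in> G i. F a}"
    using assms(1) unfolding displayed_neg_def by auto
  have ueq: "\<And>G F. finite (G i) \<Longrightarrow> u (G, F) = exp (l * (real (card {a \<in> G i. F a}) - \<alpha> * real D))"
  proof -
    fix G :: "nat \<Rightarrow> nat set" and F :: "nat \<Rightarrow> bool" assume fin: "finite (G i)"
    have "(\<Prod>a\<in>G i. (if F a then exp l else 1)) = (\<Prod>a\<in>{a \<in> G i. F a}. exp l)"
      by (rule prod.inter_filter[OF fin, symmetric])
    also have "\<dots> = exp l ^ card {a \<in> G i. F a}" by simp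
    also have "\<dots> = exp (real (card {a \<in> G i. F a}) * l)" by (simp add: exp_of_nat_mult)
    finally show "u (G, F) = exp (l * (real (card {a \<in> G i. F a}) - \<alpha> * real D))"
      unfolding u_def by (simp add: exp_add[symmetric] algebra_simps)
  qed
  have "emeasure (pair_pmf ?PG ?PF) {(G, F). \<alpha> * real D \<le> real (card {a \<in> G i. displayed_neg S G F a})}
      \<le> (\<integral>\<^sup>+ z. ennreal (if finite (fst z i) then u z else 1) \<partial>pair_pmf ?PG ?PF)"
  proof (rule markov_pmf)
    fix z assume z: "z \<in> {(G, F). \<alpha> * real D \<le> real (card {a \<in> G i. displayed_neg S G F a})}"
    obtain G F where zGF: "z = (G, F)" by (cases z)
    show "1 \<le> (if finite (fst z i) then u z else 1)"
    proof (cases "finite (G i)")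
      case True
      have "0 \<le> l * (real (card {a \<in> G i. F a}) - \<alpha> * real D)"
        using z assms(6) unfolding zGF dn by simp
      then show ?thesis using True ueq[of G F, OF True] zGF by simp
    qed (simp add: zGF)
  next
    fix z show "0 \<le> (if finite (fst z i) then u z else 1)"
      unfolding u_def by (auto simp: case_prod_unfold intro!: prod_nonneg mult_nonneg_nonneg)
  qed
  also have "\<dots> = (\<integral>\<^sup>+ G. \<integral>\<^sup>+ F. ennreal (if finite (G i) then u (G, F) else 1) \<partial>?PF \<partial>?PG)"
    by (simp add: nn_integral_pair_pmf')
  also have "\<dots> \<le> (\<integral>\<^sup>+ G. ennreal ((exp (- l * \<alpha>) * (1 - q + q * exp l)) ^ D) \<partial>?PG)"
  proof (rule nn_bound_pmf)
    fix G assume G: "G \<in> set_pmf ?PG"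
    have Gs: "G i \<subseteq> {..<m}" "card (G i) = D" using PG_support[OF G assms(2,3)] by auto
    have fin: "finite (G i)" using Gs(1) finite_subset by blast
    have "(\<integral>\<^sup>+ F. ennreal (if finite (G i) then u (G, F) else 1) \<partial>?PF)
        = (\<integral>\<^sup>+ F. ennreal (exp (- l * \<alpha> * real D) * (\<Prod>a\<in>G i. (\<lambda>a v. if v then exp l else 1) a (F a))) \<partial>?PF)"
      using fin unfolding u_def by simp
    also have "\<dots> = ennreal (exp (- l * \<alpha> * real D) * (\<Prod>a\<in>G i. (if True then exp l else 1) * q + (if False then exp l else 1) * (1 - q)))"
      by (rule Cprod_c[OF Gs(1) _ assms(4,5)]) auto
    also have "\<dots> = ennreal ((exp (- l * \<alpha>) * (1 - q + q * exp l)) ^ D)"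
    proof -
      have e: "exp (- l * \<alpha> * real D) = exp (- l * \<alpha>) ^ D"
        by (simp add: exp_of_nat_mult[symmetric] mult.commute)
      have p: "(\<Prod>a\<in>G i. (if True then exp l else 1) * q + (if False then exp l else 1) * (1 - q)) = (1 - q + q * exp l) ^ D"
        using Gs(2) by (simp add: algebra_simps)
      show ?thesis by (simp only: e p power_mult_distrib)
    qed
    finally show "(\<integral>\<^sup>+ F. ennreal (if finite (G i) then u (G, F) else 1) \<partial>?PF) \<le> ennreal ((exp (- l * \<alpha>) * (1 - q + q * exp l)) ^ D)"
      by simp
  qed
  also have "\<dots> = ennreal ((exp (- l * \<alpha>) * (1 - q + q * exp l)) ^ D)"
    by simp
  finally show ?thesis .
qed


lemma PG_healthy:
  fixes n m D i :: nat and S :: "nat set" and \<sigma> :: real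
  assumes "i < n" "i \<notin> S" "S \<subseteq> {..<n}" "2 * D < m" "0 \<le> \<sigma>" "\<sigma> \<le> 1"
  shows "(\<integral>\<^sup>+ G. ennreal (\<sigma> ^ card (G i - (\<Union>j\<in>S. G j))) \<partial>Pi_pmf {..<n} {} (\<lambda>_. unif m D))
          \<le> ennreal ((1 - (1 - \<sigma>) * (1 - real D / real (m - D)) ^ card S) ^ D)"
proof -
  define B where "B = {..<n} - {i}"
  let ?P = "\<lambda>_::nat. unif m D"
  have fB: "finite B" unfolding B_def by simp
  have iB: "i \<notin> B" unfolding B_def by simp
  have SB: "S \<subseteq> B" using assms(2,3) unfolding B_def by auto
  have fS: "finite S" using fB SB finite_subset by blast
  have nB: "{..<n} = insert i B" using assms(1) unfolding B_def by auto
  let ?h = "\<lambda>G. ennreal (\<sigma> ^ card (G i - (\<Union>j\<in>S. G j)))"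
  have "(\<integral>\<^sup>+ G. ?h G \<partial>Pi_pmf {..<n} {} ?P)
      = (\<integral>\<^sup>+ z. ?h ((\<lambda>(y, f). f(i := y)) z) \<partial>pair_pmf (unif m D) (Pi_pmf B {} ?P))"
    unfolding nB by (simp add: Pi_pmf_insert[OF fB iB])
  also have "\<dots> = (\<integral>\<^sup>+ y. \<integral>\<^sup>+ f. ennreal (\<sigma> ^ card (y - (\<Union>j\<in>S. f j))) \<partial>Pi_pmf B {} ?P \<partial>unif m D)"
  proof -
    have U: "\<And>y (f::nat \<Rightarrow> nat set). (\<Union>j\<in>S. (f(i := y)) j) = (\<Union>j\<in>S. f j)"
      by (rule SUP_cong) (use assms(2) in auto)
    have "\<And>y (f::nat \<Rightarrow> nat set). ?h (f(i := y)) = ennreal (\<sigma> ^ card (y - (\<Union>j\<in>S. f j)))"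
      by (simp only: U fun_upd_same)
    then show ?thesis by (simp add: nn_integral_pair_pmf')
  qed
  also have "\<dots> \<le> (\<integral>\<^sup>+ y. ennreal ((1 - (1 - \<sigma>) * (1 - real D / real (m - D)) ^ card S) ^ D) \<partial>unif m D)"
  proof (rule nn_bound_pmf)
    fix y assume y: "y \<in> set_pmf (unif m D)"
    have ys: "y \<subseteq> {..<m}" "card y = D" using y set_unif[of D m] assms(4) by auto
    have PS: "Pi_pmf S {} ?P = map_pmf (\<lambda>f x. if x \<in> S then f x else {}) (Pi_pmf B {} ?P)"
      by (rule Pi_pmf_subset[OF fB SB])
    have "(\<integral>\<^sup>+ f. ennreal (\<sigma> ^ card (y - (\<Union>j\<in>S. f j))) \<partial>Pi_pmf B {} ?P)
        = (\<integral>\<^sup>+ f. ennreal (\<sigma> ^ card (y - (\<Union>j\<in>S. f j))) \<partial>Pi_pmf S {} ?P)"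
    proof -
      have "\<And>f::nat \<Rightarrow> nat set. (\<Union>j\<in>S. (if j \<in> S then f j else {})) = (\<Union>j\<in>S. f j)" by auto
      then show ?thesis unfolding PS by simp
    qed
    also have "\<dots> \<le> ennreal ((1 - (1 - \<sigma>) * (1 - real D / real (m - D)) ^ card S) ^ card y)"
      by (rule multi_occ[OF fS ys(1) _ assms(4-6)]) (simp add: ys(2))
    finally show "(\<integral>\<^sup>+ f. ennreal (\<sigma> ^ card (y - (\<Union>j\<in>S. f j))) \<partial>Pi_pmf B {} ?P)
        \<le> ennreal ((1 - (1 - \<sigma>) * (1 - real D / real (m - D)) ^ card S) ^ D)" using ys(2) by simp
  qed
  also have "\<dots> = ennreal ((1 - (1 - \<sigma>) * (1 - real D / real (m - D)) ^ card S) ^ D)" by simp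
  finally show ?thesis .
qed


lemma prod_split_r:
  fixes r e :: real and T :: "nat set" and P :: "nat \<Rightarrow> bool"
  assumes "finite T" "r > 0"
  shows "(\<Prod>a\<in>T. if P a then e else r) = r ^ card T * (e / r) ^ card {a \<in> T. P a}"
proof -
  have "(\<Prod>a\<in>T. if P a then e else r) = (\<Prod>a\<in>T. r * (if P a then e / r else 1))"
    using assms(2) by (intro prod.cong) auto
  also have "\<dots> = r ^ card T * (\<Prod>a\<in>T. if P a then e / r else 1)"
    by (simp add: prod.distrib)
  also have "(\<Prod>a\<in>T. if P a then e / r else 1) = (\<Prod>a\<in>{a \<in> T. P a}. e / r)"
    by (rule prod.inter_filter[OF assms(1), symmetric])
  finally show ?thesis by simp
qed

lemma healthy_bound:
  fixes S :: "nat set" and l \<alpha> q :: real and n m D i :: nat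
  assumes "i < n" "i \<notin> S" "S \<subseteq> {..<n}" "2 * D < m" "0 < q" "q < 1" "0 \<le> l"
  shows "emeasure (pair_pmf (Pi_pmf {..<n} {} (\<lambda>_. unif m D)) (Pi_pmf {..<m} False (\<lambda>_. bernoulli_pmf q)))
     {(G, F). real (card {a \<in> G i. displayed_neg S G F a}) < \<alpha> * real D}
   \<le> ennreal ((exp (l * \<alpha>) * (((1 - real D / real (m - D)) ^ card S + (1 - (1 - real D / real (m - D)) ^ card S) * q) * exp (- l)
        + 1 - ((1 - real D / real (m - D)) ^ card S + (1 - (1 - real D / real (m - D)) ^ card S) * q))) ^ D)"
proof -
  let ?PG = "Pi_pmf {..<n} {} (\<lambda>_. unif m D)"
  let ?PF = "Pi_pmf {..<m} False (\<lambda>_. bernoulli_pmf q)"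
  define \<pi> where "\<pi> = (1 - real D / real (m - D)) ^ card S"
  define e where "e = exp (- l)"
  define r where "r = e * q + (1 - q)"
  define \<sigma> where "\<sigma> = e / r"
  define C where "C = exp (l * \<alpha> * real D) * r ^ D"
  have e0: "0 < e" "e \<le> 1" unfolding e_def using assms(7) by auto
  have r0: "0 < r" unfolding r_def using e0 assms(5,6) by (simp add: add_pos_nonneg)
  have er: "e \<le> r"
  proof -
    have "0 \<le> (1 - q) * (1 - e)" using e0 assms(6) by simp
    then show ?thesis unfolding r_def by (simp add: algebra_simps)
  qed
  have s0: "0 \<le> \<sigma>" "\<sigma> \<le> 1" unfolding \<sigma>_def using e0 r0 er by auto
  have C0: "0 \<le> C" unfolding C_def using r0 by simp
  define u where "u = (\<lambda>(G::nat \<Rightarrow> nat set, F::nat \<Rightarrow> bool).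
      exp (l * \<alpha> * real D) * (\<Prod>a\<in>G i. (if displayed_neg S G F a then e else 1)))"
  have ueq: "\<And>G F. finite (G i) \<Longrightarrow> u (G, F) = exp (l * (\<alpha> * real D - real (card {a \<in> G i. displayed_neg S G F a})))"
  proof -
    fix G :: "nat \<Rightarrow> nat set" and F :: "nat \<Rightarrow> bool" assume fin: "finite (G i)"
    have "(\<Prod>a\<in>G i. (if displayed_neg S G F a then e else 1)) = (\<Prod>a\<in>{a \<in> G i. displayed_neg S G F a}. e)"
      by (rule prod.inter_filter[OF fin, symmetric])
    also have "\<dots> = e ^ card {a \<in> G i. displayed_neg S G F a}" by simp
    also have "\<dots> = exp (real (card {a \<in> G i. displayed_neg S G F a}) * (- l))"
      unfolding e_def by (rule exp_of_nat_mult[symmetric])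
    finally show "u (G, F) = exp (l * (\<alpha> * real D - real (card {a \<in> G i. displayed_neg S G F a})))"
      unfolding u_def by (simp add: exp_add[symmetric] algebra_simps)
  qed
  have "emeasure (pair_pmf ?PG ?PF) {(G, F). real (card {a \<in> G i. displayed_neg S G F a}) < \<alpha> * real D}
      \<le> (\<integral>\<^sup>+ z. ennreal (if finite (fst z i) then u z else 1) \<partial>pair_pmf ?PG ?PF)"
  proof (rule markov_pmf)
    fix z assume z: "z \<in> {(G, F). real (card {a \<in> G i. displayed_neg S G F a}) < \<alpha> * real D}"
    obtain G F where zGF: "z = (G, F)" by (cases z)
    show "1 \<le> (if finite (fst z i) then u z else 1)"
    proof (cases "finite (G i)")
      case True
      have "0 \<le> l * (\<alpha> * real D - real (card {a \<in> G i. displayed_neg S G F a}))"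
        using z assms(7) unfolding zGF by simp
      then show ?thesis using True ueq[of G F, OF True] zGF by simp
    qed (simp add: zGF)
  next
    fix z show "0 \<le> (if finite (fst z i) then u z else 1)"
      unfolding u_def using e0 by (auto simp: case_prod_unfold intro!: prod_nonneg mult_nonneg_nonneg)
  qed
  also have "\<dots> = (\<integral>\<^sup>+ G. \<integral>\<^sup>+ F. ennreal (if finite (G i) then u (G, F) else 1) \<partial>?PF \<partial>?PG)"
    by (simp add: nn_integral_pair_pmf')
  also have "\<dots> \<le> (\<integral>\<^sup>+ G. ennreal C * ennreal (\<sigma> ^ card (G i - (\<Union>j\<in>S. G j))) \<partial>?PG)"
  proof (rule nn_bound_pmf)
    fix G assume G: "G \<in> set_pmf ?PG"
    have Gs: "G i \<subseteq> {..<m}" "card (G i) = D" using PG_support[OF G assms(1)] assms(4) by auto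
    have fin: "finite (G i)" using Gs(1) finite_subset by blast
    define unc where "unc = (\<lambda>a. \<forall>j\<in>S. a \<notin> G j)"
    define \<phi> where "\<phi> = (\<lambda>a v. if unc a \<or> v then e else 1)"
    have "(\<integral>\<^sup>+ F. ennreal (if finite (G i) then u (G, F) else 1) \<partial>?PF)
        = (\<integral>\<^sup>+ F. ennreal (exp (l * \<alpha> * real D) * (\<Prod>a\<in>G i. \<phi> a (F a))) \<partial>?PF)"
      using fin unfolding u_def \<phi>_def unc_def displayed_neg_def by simp
    also have "\<dots> = ennreal (exp (l * \<alpha> * real D) * (\<Prod>a\<in>G i. \<phi> a True * q + \<phi> a False * (1 - q)))"
      by (rule Cprod_c[OF Gs(1) _ _ _]) (use e0 assms(5,6) in \<open>auto simp: \<phi>_def\<close>)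
    also have "(\<Prod>a\<in>G i. \<phi> a True * q + \<phi> a False * (1 - q)) = (\<Prod>a\<in>G i. if unc a then e else r)"
      unfolding \<phi>_def r_def by (intro prod.cong) (auto simp: algebra_simps)
    also have "\<dots> = r ^ D * \<sigma> ^ card {a \<in> G i. unc a}"
      unfolding \<sigma>_def using prod_split_r[OF fin r0] Gs(2) by simp
    also have "{a \<in> G i. unc a} = G i - (\<Union>j\<in>S. G j)" unfolding unc_def by auto
    finally show "(\<integral>\<^sup>+ F. ennreal (if finite (G i) then u (G, F) else 1) \<partial>?PF)
        \<le> ennreal C * ennreal (\<sigma> ^ card (G i - (\<Union>j\<in>S. G j)))"
      unfolding C_def using r0 s0 by (simp add: ennreal_mult[symmetric] mult.assoc)
  qed
  also have "\<dots> = ennreal C * (\<integral>\<^sup>+ G. ennreal (\<sigma> ^ card (G i - (\<Union>j\<in>S. G j))) \<partial>?PG)"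
    by (rule nn_integral_cmult) simp
  also have "\<dots> \<le> ennreal C * ennreal ((1 - (1 - \<sigma>) * (1 - real D / real (m - D)) ^ card S) ^ D)"
    by (intro mult_left_mono PG_healthy[OF assms(1-4) s0]) simp
  also have "\<dots> = ennreal (C * (1 - (1 - \<sigma>) * \<pi>) ^ D)"
    unfolding \<pi>_def by (rule ennreal_mult'[symmetric, OF C0])
  also have "C * (1 - (1 - \<sigma>) * \<pi>) ^ D = (exp (l * \<alpha>) * ((\<pi> + (1 - \<pi>) * q) * exp (- l) + 1 - (\<pi> + (1 - \<pi>) * q))) ^ D"
  proof -
    have "exp (l * \<alpha> * real D) = exp (l * \<alpha>) ^ D"
      by (simp add: exp_of_nat_mult[symmetric] mult.commute)
    moreover have "r * (1 - (1 - \<sigma>) * \<pi>) = (\<pi> + (1 - \<pi>) * q) * exp (- l) + 1 - (\<pi> + (1 - \<pi>) * q)"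
    proof -
      have "r * \<sigma> = e" unfolding \<sigma>_def using r0 by simp
      then have "r * (1 - (1 - \<sigma>) * \<pi>) = r - r * \<pi> + e * \<pi>" by (simp add: algebra_simps)
      then show ?thesis unfolding r_def e_def by (simp add: algebra_simps)
    qed
    ultimately show ?thesis unfolding C_def by (simp add: power_mult_distrib[symmetric] mult.assoc)
  qed
  finally show ?thesis unfolding \<pi>_def .
qed

lemma gt_space_unif:
  "gt_space n k m D q = pair_pmf (pmf_of_set {S. S \<subseteq> {..<n} \<and> card S = k})
      (pair_pmf (Pi_pmf {..<n} {} (\<lambda>_. unif m D)) (Pi_pmf {..<m} False (\<lambda>_. bernoulli_pmf q)))"
  unfolding gt_space_def unif_def ..

lemma emeasure_pair_bound:
  assumes "\<And>x. x \<in> set_pmf A \<Longrightarrow> emeasure (measure_pmf B) {y. (x, y) \<in> E} \<le> ennreal b"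
  shows "emeasure (measure_pmf (pair_pmf A B)) E \<le> ennreal b"
proof -
  have "emeasure (measure_pmf (pair_pmf A B)) E = (\<integral>\<^sup>+ z. indicator E z \<partial>pair_pmf A B)" by simp
  also have "\<dots> = (\<integral>\<^sup>+ x. \<integral>\<^sup>+ y. indicator E (x, y) \<partial>B \<partial>A)" by (rule nn_integral_pair_pmf')
  also have "\<dots> = (\<integral>\<^sup>+ x. emeasure (measure_pmf B) {y. (x, y) \<in> E} \<partial>A)"
  proof (intro nn_integral_cong)
    fix x
    have "(\<lambda>y. indicator E (x, y) :: ennreal) = indicator {y. (x, y) \<in> E}" by (auto simp: indicator_def)
    then show "(\<integral>\<^sup>+ y. indicator E (x, y) \<partial>B) = emeasure (measure_pmf B) {y. (x, y) \<in> E}" by simp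
  qed
  also have "\<dots> \<le> (\<integral>\<^sup>+ x. ennreal b \<partial>A)" by (rule nn_bound_pmf) (rule assms)
  also have "\<dots> = ennreal b" by simp
  finally show ?thesis .
qed

lemma sum_if_bound:
  fixes a b :: real
  assumes "S \<subseteq> {..<n}" "card S = k" "0 \<le> a" "0 \<le> b"
  shows "(\<Sum>i<n. if i \<in> S then a else b) \<le> real k * a + real n * b"
proof -
  have "(\<Sum>i<n. if i \<in> S then a else b) \<le> (\<Sum>i<n. (if i \<in> S then a else 0) + b)"
    using assms(4) by (intro sum_mono) auto
  also have "\<dots> = (\<Sum>i<n. if i \<in> S then a else 0) + real n * b" by (simp add: sum.distrib)
  also have "(\<Sum>i<n. if i \<in> S then a else 0) = real (card ({..<n} \<inter> S)) * a"
    by (simp add: sum.If_cases)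
  also have "{..<n} \<inter> S = S" using assms(1) by auto
  finally show ?thesis using assms(2) by simp
qed

lemma fail_bound:
  fixes q \<alpha> l1 l2 :: real and n k m D :: nat
  assumes "k \<le> n" "2 * D < m" "0 < q" "q < 1" "0 \<le> l1" "0 \<le> l2"
  defines "\<pi> \<equiv> (1 - real D / real (m - D)) ^ k"
  defines "s \<equiv> \<pi> + (1 - \<pi>) * q"
  defines "B1 \<equiv> exp (- l1 * \<alpha>) * (1 - q + q * exp l1)"
  defines "B2 \<equiv> exp (l2 * \<alpha>) * (s * exp (- l2) + 1 - s)"
  shows "1 - success_prob n k m D q \<alpha> \<le> real k * B1 ^ D + real n * B2 ^ D"
proof -
  let ?PS = "pmf_of_set {S. S \<subseteq> {..<n} \<and> card S = k}"
  let ?PG = "Pi_pmf {..<n} {} (\<lambda>_. unif m D)"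
  let ?PF = "Pi_pmf {..<m} False (\<lambda>_. bernoulli_pmf q)"
  let ?Succ = "{(S, G, F). noisy_COMP n D \<alpha> S G F = S}"
  have d1: "real D / real (m - D) \<le> 1" using assms(2) by (simp add: divide_le_eq)
  have pi0: "0 \<le> \<pi>" "\<pi> \<le> 1" unfolding \<pi>_def using d1 by (auto intro: power_le_one)
  have s01: "0 \<le> s" "s \<le> 1"
  proof -
    show "0 \<le> s" unfolding s_def using pi0 assms(3,4) by (intro add_nonneg_nonneg mult_nonneg_nonneg) auto
    have "1 - s = (1 - \<pi>) * (1 - q)" unfolding s_def by (simp add: algebra_simps)
    moreover have "0 \<le> (1 - \<pi>) * (1 - q)" using pi0 assms(4) by simp
    ultimately show "s \<le> 1" by simp
  qed
  have B10: "0 \<le> B1" unfolding B1_def using assms(3,4) by (auto intro!: mult_nonneg_nonneg add_nonneg_nonneg)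
  have B20: "0 \<le> B2"
  proof -
    have "0 \<le> s * exp (- l2)" using s01 by simp
    then have "0 \<le> s * exp (- l2) + 1 - s" using s01 by linarith
    then show ?thesis unfolding B2_def by simp
  qed
  have ne: "{S. S \<subseteq> {..<n} \<and> card S = k} \<noteq> {}"
    by (rule ex_in_conv[THEN iffD1], rule exI[of _ "{..<k}"]) (use assms(1) in auto)
  have fin: "finite {S. S \<subseteq> {..<n} \<and> card S = k}"
    by (rule finite_subset[of _ "Pow {..<n}"]) auto
  have main: "emeasure (measure_pmf (gt_space n k m D q)) (UNIV - ?Succ) \<le> ennreal (real k * B1 ^ D + real n * B2 ^ D)"
    unfolding gt_space_unif
  proof (rule emeasure_pair_bound)
    fix S assume S: "S \<in> set_pmf ?PS"
    then have Ss: "S \<subseteq> {..<n}" "card S = k" using set_pmf_of_set[OF ne fin] by auto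
    have fS: "finite S" using Ss(1) finite_subset by blast
    define E where "E = (\<lambda>i. if i \<in> S then {(G, F). \<alpha> * real D \<le> real (card {a \<in> G i. displayed_neg S G F a})}
                          else {(G, F). real (card {a \<in> G i. displayed_neg S G F a}) < \<alpha> * real D})"
    have sub: "{y. (S, y) \<in> UNIV - ?Succ} \<subseteq> (\<Union>i<n. E i)"
    proof
      fix y assume y: "y \<in> {y. (S, y) \<in> UNIV - ?Succ}"
      obtain G F where yGF: "y = (G, F)" by (cases y)
      have neq: "noisy_COMP n D \<alpha> S G F \<noteq> S" using y yGF by auto
      have Csub: "noisy_COMP n D \<alpha> S G F \<subseteq> {..<n}" unfolding noisy_COMP_def by auto
      obtain i where i: "i < n" "(i \<in> S) \<noteq> (i \<in> noisy_COMP n D \<alpha> S G F)"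
        using neq Csub Ss(1) by blast
      have "y \<in> E i"
      proof (cases "i \<in> S")
        case True
        then have "i \<notin> noisy_COMP n D \<alpha> S G F" using i by simp
        then show ?thesis using True i(1) unfolding E_def yGF noisy_COMP_def by auto
      next
        case False
        then have "i \<in> noisy_COMP n D \<alpha> S G F" using i by simp
        then show ?thesis using False i(1) unfolding E_def yGF noisy_COMP_def by auto
      qed
      then show "y \<in> (\<Union>i<n. E i)" using i(1) by blast
    qed
    have "emeasure (measure_pmf (pair_pmf ?PG ?PF)) {y. (S, y) \<in> UNIV - ?Succ}
        \<le> emeasure (measure_pmf (pair_pmf ?PG ?PF)) (\<Union>i<n. E i)"
      by (rule emeasure_mono[OF sub]) simp
    also have "\<dots> \<le> (\<Sum>i<n. emeasure (measure_pmf (pair_pmf ?PG ?PF)) (E i))"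
      by (rule emeasure_subadditive_finite) auto
    also have "\<dots> \<le> (\<Sum>i<n. ennreal (if i \<in> S then B1 ^ D else B2 ^ D))"
    proof (rule sum_mono)
      fix i assume i: "i \<in> {..<n}"
      show "emeasure (measure_pmf (pair_pmf ?PG ?PF)) (E i) \<le> ennreal (if i \<in> S then B1 ^ D else B2 ^ D)"
      proof (cases "i \<in> S")
        case True
        then show ?thesis unfolding E_def B1_def
          using infected_bound[OF True _ _ _ _ assms(5), of n D m q \<alpha>] i assms(2,3,4) by simp
      next
        case False
        then show ?thesis unfolding E_def B2_def s_def \<pi>_def
          using healthy_bound[OF _ False Ss(1) assms(2) assms(3,4,6), of \<alpha>] i Ss(2) by simp
      qed
    qed
    also have "\<dots> = ennreal (\<Sum>i<n. if i \<in> S then B1 ^ D else B2 ^ D)"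
      by (rule sum_ennreal) (use B10 B20 in auto)
    also have "\<dots> \<le> ennreal (real k * B1 ^ D + real n * B2 ^ D)"
      by (rule ennreal_leI, rule sum_if_bound[OF Ss]) (use B10 B20 in auto)
    finally show "emeasure (measure_pmf (pair_pmf ?PG ?PF)) {y. (S, y) \<in> UNIV - ?Succ}
        \<le> ennreal (real k * B1 ^ D + real n * B2 ^ D)" .
  qed
  have "measure_pmf.prob (gt_space n k m D q) (UNIV - ?Succ) \<le> real k * B1 ^ D + real n * B2 ^ D"
  proof -
    have "ennreal (measure_pmf.prob (gt_space n k m D q) (UNIV - ?Succ)) \<le> ennreal (real k * B1 ^ D + real n * B2 ^ D)"
      using main by (simp add: measure_pmf.emeasure_eq_measure)
    then show ?thesis using B10 B20 by (subst (asm) ennreal_le_iff) auto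
  qed
  moreover have "measure_pmf.prob (gt_space n k m D q) (UNIV - ?Succ) = 1 - success_prob n k m D q \<alpha>"
    unfolding success_prob_def using measure_pmf.prob_compl[of ?Succ "gt_space n k m D q"] by simp
  ultimately show ?thesis by simp
qed

lemma asym_bounds:
  fixes k :: "nat \<Rightarrow> nat" and \<theta> :: real
  assumes "(\<lambda>n. real (k n)) \<sim>[at_top] (\<lambda>n. real n powr \<theta>)"
  shows "eventually (\<lambda>n. real n powr \<theta> / 2 \<le> real (k n) \<and> real (k n) \<le> 2 * real n powr \<theta> \<and> n \<ge> 1) at_top"
proof -
  have ev1: "eventually (\<lambda>n::nat. n \<ge> 1) at_top" by (rule eventually_ge_at_top)
  have "eventually (\<lambda>n::nat. real (k n) \<noteq> 0 \<or> real n powr \<theta> \<noteq> 0) at_top"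
    using ev1 by eventually_elim auto
  then have lim: "((\<lambda>n. real (k n) / real n powr \<theta>) \<longlongrightarrow> 1) at_top"
    by (rule asymp_equivD_strong[OF assms])
  have e1: "eventually (\<lambda>n. real (k n) / real n powr \<theta> > 1/2) at_top"
    using lim by (rule order_tendstoD) simp
  have e2: "eventually (\<lambda>n. real (k n) / real n powr \<theta> < 2) at_top"
    using lim by (rule order_tendstoD) simp
  show ?thesis using e1 e2 ev1
  proof eventually_elim
    case (elim n)
    have p: "real n powr \<theta> > 0" using elim(3) by simp
    show ?case using elim p by (auto simp: field_simps)
  qed
qed


lemma exp_ln_ratio:
  fixes x y a :: real
  assumes "0 < x" "0 < y"
  shows "exp (- a * ln (x / y)) = (y / x) powr a"
proof -
  have "ln (y / x) = - ln (x / y)" using assms by (simp add: ln_div)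
  then show ?thesis using assms by (simp add: powr_def)
qed

lemma decay_pt:
  fixes \<theta> a :: real and n kn :: nat
  assumes "real n powr \<theta> / 2 \<le> real kn" "real kn \<le> 2 * real n powr \<theta>" "n \<ge> 1" "0 \<le> a"
  shows "real kn * exp (- a * ln (real n / real kn)) \<le> 2 * 2 powr a * real n powr (\<theta> + (\<theta> - 1) * a)"
    and "real n * exp (- a * ln (real n / real kn)) \<le> 2 powr a * real n powr (1 + (\<theta> - 1) * a)"
proof -
  have np: "real n > 0" using assms(3) by simp
  have kp: "real kn > 0" using assms(1) np by (smt (verit) powr_gt_zero divide_pos_pos)
  have r: "real kn / real n \<le> 2 * real n powr (\<theta> - 1)"
  proof -
    have "real kn / real n \<le> 2 * real n powr \<theta> / real n" using assms(2) np by (simp add: divide_right_mono)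
    also have "\<dots> = 2 * real n powr (\<theta> - 1)" using np by (simp add: powr_diff)
    finally show ?thesis .
  qed
  have "(real kn / real n) powr a \<le> (2 * real n powr (\<theta> - 1)) powr a"
    using r kp np assms(4) by (intro powr_mono2) auto
  also have "\<dots> = 2 powr a * real n powr ((\<theta> - 1) * a)"
    using np by (simp add: powr_mult powr_powr)
  finally have P: "exp (- a * ln (real n / real kn)) \<le> 2 powr a * real n powr ((\<theta> - 1) * a)"
    using exp_ln_ratio[OF np kp] by simp
  have P0: "0 \<le> exp (- a * ln (real n / real kn))" by simp
  have "real kn * exp (- a * ln (real n / real kn)) \<le> (2 * real n powr \<theta>) * (2 powr a * real n powr ((\<theta> - 1) * a))"
    using assms(2) P P0 kp by (intro mult_mono) auto
  also have "\<dots> = 2 * 2 powr a * real n powr (\<theta> + (\<theta> - 1) * a)"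
    using np by (simp add: powr_add)
  finally show "real kn * exp (- a * ln (real n / real kn)) \<le> 2 * 2 powr a * real n powr (\<theta> + (\<theta> - 1) * a)" .
  have "real n * exp (- a * ln (real n / real kn)) \<le> real n * (2 powr a * real n powr ((\<theta> - 1) * a))"
    using P np by (intro mult_left_mono) auto
  also have "\<dots> = 2 powr a * real n powr (1 + (\<theta> - 1) * a)"
    using np by (simp add: powr_add)
  finally show "real n * exp (- a * ln (real n / real kn)) \<le> 2 powr a * real n powr (1 + (\<theta> - 1) * a)" .
qed

lemma powr_neg_lim:
  fixes C e :: real
  assumes "e < 0"
  shows "((\<lambda>n::nat. C * real n powr e) \<longlongrightarrow> 0) at_top"
proof -
  have "((\<lambda>n::nat. real n powr e) \<longlongrightarrow> 0) at_top"
    by (rule tendsto_neg_powr[OF assms filterlim_real_sequentially])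
  then show ?thesis by (rule tendsto_mult_right_zero)
qed

lemma decay_lim:
  fixes k :: "nat \<Rightarrow> nat" and \<theta> a :: real
  assumes ev: "eventually (\<lambda>n. real n powr \<theta> / 2 \<le> real (k n) \<and> real (k n) \<le> 2 * real n powr \<theta> \<and> n \<ge> 1) at_top"
    and "0 \<le> a"
  shows "\<theta> + (\<theta> - 1) * a < 0 \<Longrightarrow> ((\<lambda>n. real (k n) * exp (- a * ln (real n / real (k n)))) \<longlongrightarrow> 0) at_top"
    and "1 + (\<theta> - 1) * a < 0 \<Longrightarrow> ((\<lambda>n. real n * exp (- a * ln (real n / real (k n)))) \<longlongrightarrow> 0) at_top"
proof -
  assume neg: "\<theta> + (\<theta> - 1) * a < 0"
  show "((\<lambda>n. real (k n) * exp (- a * ln (real n / real (k n)))) \<longlongrightarrow> 0) at_top"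
  proof (rule tendsto_sandwich[OF _ _ tendsto_const powr_neg_lim[OF neg]])
    show "eventually (\<lambda>n. 0 \<le> real (k n) * exp (- a * ln (real n / real (k n)))) at_top" by simp
    show "eventually (\<lambda>n. real (k n) * exp (- a * ln (real n / real (k n))) \<le> 2 * 2 powr a * real n powr (\<theta> + (\<theta> - 1) * a)) at_top"
      using ev by eventually_elim (use decay_pt(1) assms(2) in blast)
  qed
next
  assume neg: "1 + (\<theta> - 1) * a < 0"
  show "((\<lambda>n. real n * exp (- a * ln (real n / real (k n)))) \<longlongrightarrow> 0) at_top"
  proof (rule tendsto_sandwich[OF _ _ tendsto_const powr_neg_lim[OF neg]])
    show "eventually (\<lambda>n. 0 \<le> real n * exp (- a * ln (real n / real (k n)))) at_top" by simp
    show "eventually (\<lambda>n. real n * exp (- a * ln (real n / real (k n))) \<le> 2 powr a * real n powr (1 + (\<theta> - 1) * a)) at_top"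
      using ev by eventually_elim (use decay_pt(2) assms(2) in blast)
  qed
qed


lemma ln_nat_at_top: "filterlim (\<lambda>n::nat. ln (real n)) at_top at_top"
  by (rule filterlim_compose[OF ln_at_top filterlim_real_sequentially])

lemma ev_ln_ge: "eventually (\<lambda>n::nat. Z \<le> ln (real n)) at_top"
  using ln_nat_at_top by (simp add: filterlim_at_top)

lemma grow_k:
  fixes k :: "nat \<Rightarrow> nat" and \<theta> K0 :: real
  assumes ev: "eventually (\<lambda>n. real n powr \<theta> / 2 \<le> real (k n) \<and> real (k n) \<le> 2 * real n powr \<theta> \<and> n \<ge> 1) at_top"
    and "0 < \<theta>"
  shows "eventually (\<lambda>n. K0 \<le> real (k n)) at_top"
proof -
  define K where "K = max K0 1"
  have K: "K0 \<le> K" "0 < K" unfolding K_def by auto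
  show ?thesis using ev ev_ln_ge[of "ln (2 * K) / \<theta>"]
  proof eventually_elim
    case (elim n)
    have np: "real n > 0" using elim(1) by simp
    have "ln (2 * K) \<le> \<theta> * ln (real n)" using elim(2) assms(2) by (simp add: field_simps)
    then have "exp (ln (2 * K)) \<le> exp (\<theta> * ln (real n))" by simp
    then have "2 * K \<le> real n powr \<theta>" using K np by (simp add: powr_def mult.commute)
    then show ?case using elim(1) K by simp
  qed
qed

lemma grow_L:
  fixes k :: "nat \<Rightarrow> nat" and \<theta> L0 :: real
  assumes ev: "eventually (\<lambda>n. real n powr \<theta> / 2 \<le> real (k n) \<and> real (k n) \<le> 2 * real n powr \<theta> \<and> n \<ge> 1) at_top"
    and "0 < \<theta>" "\<theta> < 1"
  shows "eventually (\<lambda>n. L0 \<le> ln (real n / real (k n))) at_top"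
  using ev ev_ln_ge[of "(L0 + ln 2) / (1 - \<theta>)"]
proof eventually_elim
  case (elim n)
  have np: "real n > 0" using elim(1) by simp
  have pp: "real n powr \<theta> > 0" using np by simp
  have kp: "real (k n) > 0" using elim(1) pp by linarith
  have "L0 + ln 2 \<le> (1 - \<theta>) * ln (real n)" using elim(2) assms(3) by (simp add: field_simps)
  also have "(1 - \<theta>) * ln (real n) - ln 2 = ln (real n / (2 * real n powr \<theta>))"
    using np by (simp add: ln_div ln_mult ln_powr algebra_simps)
  finally have a: "L0 \<le> ln (real n / (2 * real n powr \<theta>))" by simp
  have "real n / (2 * real n powr \<theta>) \<le> real n / real (k n)"
    using elim(1) kp np by (intro divide_left_mono) auto
  then have "ln (real n / (2 * real n powr \<theta>)) \<le> ln (real n / real (k n))"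
    using np pp kp by (subst ln_le_cancel_iff) auto
  then show ?case using a by simp
qed

lemma ln_strict:
  fixes x :: real
  assumes "0 < x" "x \<noteq> 1"
  shows "ln x < x - 1"
proof -
  define y where "y = sqrt x"
  have y0: "0 < y" using assms(1) unfolding y_def by simp
  have yx: "y * y = x" using assms(1) unfolding y_def by simp
  have y1: "y \<noteq> 1" using assms(2) yx by auto
  have "ln x = ln y + ln y" using yx y0 ln_mult[of y y] by simp
  then have "ln x = 2 * ln y" by simp
  also have "\<dots> \<le> 2 * (y - 1)" using ln_le_minus_one[OF y0] by simp
  also have "2 * (y - 1) < x - 1"
  proof -
    have "0 < (y - 1)^2" using y1 by simp
    then show ?thesis using yx by (simp add: power2_eq_square algebra_simps)
  qed
  finally show ?thesis .
qed

lemma DKL_pos: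
  fixes r s :: real
  assumes "0 < r" "r < 1" "0 < s" "s < 1" "r \<noteq> s"
  shows "DKL r s > 0"
proof -
  have sr0: "0 < s / r" using assms(1,3) by simp
  have sr1: "s / r \<noteq> 1" using assms(5) by (simp add: divide_eq_1_iff)
  have a: "ln (s / r) < s / r - 1" by (rule ln_strict[OF sr0 sr1])
  have b: "ln ((1 - s) / (1 - r)) \<le> (1 - s) / (1 - r) - 1" using assms by (intro ln_le_minus_one) auto
  have "r * ln (s / r) < r * (s / r - 1)" by (rule mult_strict_left_mono[OF a assms(1)])
  moreover have "(1 - r) * ln ((1 - s) / (1 - r)) \<le> (1 - r) * ((1 - s) / (1 - r) - 1)"
    using b assms(2) by (intro mult_left_mono) auto
  ultimately have "r * ln (s / r) + (1 - r) * ln ((1 - s) / (1 - r)) < r * (s / r - 1) + (1 - r) * ((1 - s) / (1 - r) - 1)"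
    by simp
  also have "\<dots> = 0"
  proof -
    have "r * (s / r - 1) = s - r" using assms(1) by (simp add: right_diff_distrib)
    moreover have "(1 - r) * ((1 - s) / (1 - r) - 1) = r - s"
    proof -
      have h: "(1 - r) * ((1 - s) / (1 - r)) = 1 - s" using assms(2) by simp
      show ?thesis unfolding right_diff_distrib h by simp
    qed
    ultimately show ?thesis by simp
  qed
  finally have neg: "r * ln (s / r) + (1 - r) * ln ((1 - s) / (1 - r)) < 0" .
  have "ln (s / r) = - ln (r / s)" using assms by (simp add: ln_div)
  moreover have "ln ((1 - s) / (1 - r)) = - ln ((1 - r) / (1 - s))" using assms by (simp add: ln_div)
  ultimately show ?thesis using neg unfolding DKL_def by simp
qed

lemma chernoff_id:
  fixes r p :: real
  assumes "0 < r" "r < 1" "0 < p" "p < 1"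
  defines "l \<equiv> ln (p * (1 - r) / (r * (1 - p)))"
  shows "exp (l * r) * (p * exp (- l) + 1 - p) = exp (- DKL r p)"
proof -
  define A where "A = ln p"
  define B where "B = ln (1 - p)"
  define C where "C = ln r"
  define E where "E = ln (1 - r)"
  have l_eq: "l = A + E - C - B" unfolding l_def A_def B_def C_def E_def using assms(1-4)
    by (simp add: ln_div ln_mult)
  have e1: "p * exp (- l) = r * (1 - p) / (1 - r)"
  proof -
    have "p * exp (- l) = exp A * exp (- l)" unfolding A_def using assms by simp
    also have "\<dots> = exp (C + B - E)" unfolding l_eq by (simp add: exp_add[symmetric])
    also have "\<dots> = exp C * exp B / exp E" by (simp add: exp_diff exp_add)
    also have "\<dots> = r * (1 - p) / (1 - r)" unfolding C_def B_def E_def using assms by simp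
    finally show ?thesis .
  qed
  have e2: "p * exp (- l) + 1 - p = exp (B - E)"
  proof -
    have "exp (B - E) = (1 - p) / (1 - r)" unfolding B_def E_def using assms by (simp add: exp_diff)
    moreover have "r * (1 - p) / (1 - r) + 1 - p = (1 - p) / (1 - r)" using assms by (simp add: field_simps)
    ultimately show ?thesis using e1 by simp
  qed
  have D: "DKL r p = r * (C - A) + (1 - r) * (E - B)"
    unfolding DKL_def A_def B_def C_def E_def using assms by (simp add: ln_div)
  have "exp (l * r) * (p * exp (- l) + 1 - p) = exp (l * r + (B - E))" unfolding e2 by (simp add: exp_add)
  also have "l * r + (B - E) = - DKL r p" unfolding D l_eq by (simp add: algebra_simps)
  finally show ?thesis .
qed

lemma adm_facts:
  assumes "admissible q \<alpha> d" "0 < q" "q < 1"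
  shows "0 < d" "q < \<alpha>" "\<alpha> < exp (- d) + (1 - exp (- d)) * q" "0 < \<alpha>" "\<alpha> < 1"
    "exp (- d) + (1 - exp (- d)) * q < 1" "0 < exp (- d) + (1 - exp (- d)) * q"
    "DKL \<alpha> q > 0" "DKL \<alpha> (exp (- d) + (1 - exp (- d)) * q) > 0"
proof -
  show d: "0 < d" "q < \<alpha>" "\<alpha> < exp (- d) + (1 - exp (- d)) * q" using assms unfolding admissible_def by auto
  have e: "exp (- d) < 1" "0 < exp (- d)" using d(1) by auto
  have "1 - (exp (- d) + (1 - exp (- d)) * q) = (1 - exp (- d)) * (1 - q)" by (simp add: algebra_simps)
  moreover have "(1 - exp (- d)) * (1 - q) > 0" using e assms(3) by simp
  ultimately show s1: "exp (- d) + (1 - exp (- d)) * q < 1" by simp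
  show s0: "0 < exp (- d) + (1 - exp (- d)) * q" using e assms(2) by (intro add_pos_nonneg) auto
  show a0: "0 < \<alpha>" using d assms(2) by simp
  show a1: "\<alpha> < 1" using d s1 by simp
  show "DKL \<alpha> q > 0" using a0 a1 assms d by (intro DKL_pos) auto
  show "DKL \<alpha> (exp (- d) + (1 - exp (- d)) * q) > 0" using a0 a1 s0 s1 d by (intro DKL_pos) auto
qed

lemma choose_params:
  fixes q \<theta> \<epsilon> c :: real
  assumes "0 < q" "q < 1" "0 < \<theta>" "\<theta> < 1" "\<epsilon> > 0" "c > (1 + \<epsilon>) * mCOMP_coeff \<theta> q"
  shows "\<exists>\<alpha> d. admissible q \<alpha> d \<and> b1 \<theta> q \<alpha> d < c \<and> b2 \<theta> q \<alpha> d < c"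
proof -
  define X where "X = {max (b1 \<theta> q \<alpha> d) (b2 \<theta> q \<alpha> d) | \<alpha> d. admissible q \<alpha> d}"
  have pos: "0 \<le> max (b1 \<theta> q \<alpha> d) (b2 \<theta> q \<alpha> d)" if "admissible q \<alpha> d" for \<alpha> d
  proof -
    have f: "0 < d" "DKL \<alpha> q > 0" using adm_facts[OF that assms(1,2)] by auto
    have "0 \<le> b1 \<theta> q \<alpha> d" unfolding b1_def using f assms(3,4) by (intro mult_nonneg_nonneg) auto
    then show ?thesis by simp
  qed
  define s1 where "s1 = exp (- 1) + (1 - exp (- 1)) * q"
  have "q < s1"
  proof -
    have "s1 - q = exp (- 1) * (1 - q)" unfolding s1_def by (simp add: algebra_simps)
    moreover have "exp (- 1) * (1 - q) > 0" using assms(2) by simp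
    ultimately show ?thesis by simp
  qed
  then have "admissible q ((q + s1) / 2) 1" unfolding admissible_def s1_def[symmetric] by simp
  then have ne: "X \<noteq> {}" unfolding X_def by blast
  have lb: "\<And>x. x \<in> X \<Longrightarrow> 0 \<le> x" unfolding X_def using pos by blast
  have I0: "0 \<le> Inf X" by (rule cInf_greatest[OF ne lb])
  have "Inf X \<le> (1 + \<epsilon>) * Inf X"
  proof -
    have "0 \<le> \<epsilon> * Inf X" using I0 assms(5) by simp
    then show ?thesis by (simp add: algebra_simps)
  qed
  also have "\<dots> < c" using assms(6) unfolding mCOMP_coeff_def X_def by simp
  finally obtain x where x: "x \<in> X" "x < c" using cInf_lessD[OF ne] by blast
  then obtain \<alpha> d where ad: "admissible q \<alpha> d" "x = max (b1 \<theta> q \<alpha> d) (b2 \<theta> q \<alpha> d)"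
    unfolding X_def by blast
  then have "b1 \<theta> q \<alpha> d < c" "b2 \<theta> q \<alpha> d < c" using x(2) by auto
  then show ?thesis using ad(1) by blast
qed

lemma pi_lower:
  fixes k D m :: nat and d' :: real
  assumes "2 * D < m" "real k * real D / (real m - 2 * real D) \<le> d'"
  shows "exp (- d') \<le> (1 - real D / real (m - D)) ^ k"
proof -
  have mD: "real (m - D) = real m - real D" using assms(1) by simp
  have p1: "real m - 2 * real D > 0" using assms(1) by linarith
  have p2: "real m - real D > 0" using assms(1) by linarith
  define x where "x = (real m - real D) / (real m - 2 * real D)"
  have x0: "x > 0" unfolding x_def using p1 p2 by simp
  have inv: "1 - real D / real (m - D) = 1 / x"
    unfolding x_def mD using p1 p2 by (simp add: field_simps)
  have "ln x \<le> x - 1" by (rule ln_le_minus_one[OF x0])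
  also have "x - 1 = real D / (real m - 2 * real D)" unfolding x_def using p1 by (simp add: field_simps)
  finally have lx: "ln x \<le> real D / (real m - 2 * real D)" .
  have "real k * ln x \<le> real k * (real D / (real m - 2 * real D))" by (rule mult_left_mono[OF lx]) simp
  also have "\<dots> \<le> d'" using assms(2) by simp
  finally have kl: "- d' \<le> - (real k * ln x)" by simp
  have "exp (- d') \<le> exp (- (real k * ln x))" using kl by simp
  also have "\<dots> = (1 / x) ^ k"
  proof -
    have "exp (- (real k * ln x)) = exp (real k * ln (1 / x))" using x0 by (simp add: ln_div)
    also have "\<dots> = exp (ln (1 / x)) ^ k" by (rule exp_of_nat_mult)
    also have "\<dots> = (1 / x) ^ k" using x0 by simp
    finally show ?thesis .
  qed
  finally show ?thesis unfolding inv .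
qed

lemma nat_ceil_bounds:
  fixes x :: real
  assumes "0 \<le> x"
  shows "x \<le> real (nat \<lceil>x\<rceil>)" "real (nat \<lceil>x\<rceil>) \<le> x + 1"
proof -
  have "real (nat \<lceil>x\<rceil>) = of_int \<lceil>x\<rceil>" using assms by simp
  then show "x \<le> real (nat \<lceil>x\<rceil>)" "real (nat \<lceil>x\<rceil>) \<le> x + 1"
    using le_of_int_ceiling[of x] of_int_ceiling_le_add_one[of x] by auto
qed

lemma numeric_cond:
  fixes k L c d d' Dr Mr :: real
  assumes "0 < c" "0 < d" "d < d'" "1 \<le> L" "2 / c < L" "2 / ((d' - d) * c) \<le> L"
    "2 * d + 1 \<le> k" "4 * d' * (c * d + 1) / ((d' - d) * c) \<le> k"
    "c * d * L \<le> Dr" "Dr \<le> c * d * L + 1" "c * k * L \<le> Mr"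
  shows "2 * Dr < Mr" "k * Dr / (Mr - 2 * Dr) \<le> d'"
proof -
  have cL: "2 < c * L" using assms(1,5) by (simp add: divide_less_eq mult.commute)
  have "c * (2 * d + 1) * L \<le> c * k * L"
    using assms(1,4,7) by (intro mult_right_mono mult_left_mono) auto
  then have "2 * c * d * L + c * L \<le> Mr" using assms(11) by (simp add: algebra_simps)
  then show lt: "2 * Dr < Mr" using assms(10) cL by linarith
  have pos: "Mr - 2 * Dr > 0" using lt by simp
  have dd: "0 < d' - d" using assms(3) by simp
  have k0: "0 < k" using assms(2,7) by linarith
  have A: "k \<le> (d' - d) * c * k * L / 2"
  proof -
    have "2 \<le> (d' - d) * c * L" using assms(6) dd assms(1) by (simp add: divide_le_eq mult.commute)
    then have "k * 2 \<le> k * ((d' - d) * c * L)" using k0 by (intro mult_left_mono) auto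
    then show ?thesis by (simp add: algebra_simps)
  qed
  have B: "d' * (2 * c * d * L + 2) \<le> (d' - d) * c * k * L / 2"
  proof -
    have d'0: "0 < d'" using assms(2,3) by simp
    have "2 * c * d * L + 2 \<le> 2 * c * d * L + 2 * L" using assms(4) by simp
    then have "d' * (2 * c * d * L + 2) \<le> d' * (2 * (c * d + 1) * L)" using d'0 by (intro mult_left_mono) (auto simp: algebra_simps)
    also have "\<dots> = (4 * d' * (c * d + 1) / ((d' - d) * c)) * ((d' - d) * c * L / 2)"
      using dd assms(1) by (simp add: field_simps)
    also have "\<dots> \<le> k * ((d' - d) * c * L / 2)"
      using assms(8) dd assms(1,4) by (intro mult_right_mono) auto
    finally show ?thesis by (simp add: algebra_simps)
  qed
  have "k * Dr \<le> k * (c * d * L + 1)" using assms(10) k0 by (intro mult_left_mono) auto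
  also have "\<dots> = k * c * d * L + k" by (simp add: algebra_simps)
  also have "\<dots> \<le> d' * (c * k * L - 2 * (c * d * L + 1))"
  proof -
    have "k * c * d * L + k + d' * (2 * c * d * L + 2) \<le> k * c * d * L + (d' - d) * c * k * L"
      using A B by simp
    also have "\<dots> = d' * (c * k * L)" by (simp add: algebra_simps)
    finally show ?thesis by (simp add: algebra_simps)
  qed
  also have "\<dots> \<le> d' * (Mr - 2 * Dr)"
    using assms(2,3,10,11) by (intro mult_left_mono) auto
  finally have "k * Dr \<le> d' * (Mr - 2 * Dr)" .
  then show "k * Dr / (Mr - 2 * Dr) \<le> d'" using pos by (simp add: divide_le_eq)
qed

theorem corollary2p7:
  fixes q \<theta> \<epsilon> c :: real and k :: "nat \<Rightarrow> nat"
  assumes "0 < q" "q < 1" "0 < \<theta>" "\<theta> < 1" "\<epsilon> > 0"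
    and "(\<lambda>n. real (k n)) \<sim>[at_top] (\<lambda>n. real n powr \<theta>)"
    and "c > (1 + \<epsilon>) * mCOMP_coeff \<theta> q"
  shows "\<exists>\<alpha> d. admissible q \<alpha> d \<and>
           ((\<lambda>n. success_prob n (k n)
                    (nat \<lceil>c * real (k n) * ln (real n / real (k n))\<rceil>)
                    (nat \<lceil>c * d * ln (real n / real (k n))\<rceil>) q \<alpha>)
             \<longlongrightarrow> 1) at_top"
proof -
  obtain \<alpha> d where ad: "admissible q \<alpha> d" and b1c: "b1 \<theta> q \<alpha> d < c" and b2c: "b2 \<theta> q \<alpha> d < c"
    using choose_params[OF assms(1-5,7)] by blast
  note af = adm_facts[OF ad assms(1,2)]
  define sI where "sI = exp (- d) + (1 - exp (- d)) * q"
  define D1 where "D1 = DKL \<alpha> q"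
  define D2 where "D2 = DKL \<alpha> sI"
  have d0: "0 < d" and qa: "q < \<alpha>" and as: "\<alpha> < sI" and a0: "0 < \<alpha>" and a1: "\<alpha> < 1"
    and s1: "sI < 1" and s0: "0 < sI" and D1p: "D1 > 0" and D2p: "D2 > 0"
    using af unfolding sI_def D1_def D2_def by auto
  have P1: "0 < (1 - \<theta>) * (d * D1)" using assms(4) d0 D1p by simp
  have P2: "0 < (1 - \<theta>) * (d * D2)" using assms(4) d0 D2p by simp
  have b1e: "b1 \<theta> q \<alpha> d = \<theta> / ((1 - \<theta>) * (d * D1))" unfolding b1_def D1_def by simp
  have b2e: "b2 \<theta> q \<alpha> d = 1 / ((1 - \<theta>) * (d * D2))" unfolding b2_def D2_def sI_def by simp
  have th1: "\<theta> < c * ((1 - \<theta>) * (d * D1))" using b1c P1 unfolding b1e by (simp add: divide_less_eq)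
  have th2: "1 < c * ((1 - \<theta>) * (d * D2))" using b2c P2 unfolding b2e by (simp add: divide_less_eq)
  have c0: "0 < c"
  proof -
    have "0 < b1 \<theta> q \<alpha> d" unfolding b1e using assms(3) P1 by simp
    then show ?thesis using b1c by simp
  qed
  define a where "a = c * d * D1"
  have a_0: "0 \<le> a" unfolding a_def using c0 d0 D1p by simp
  have a_neg: "\<theta> + (\<theta> - 1) * a < 0" using th1 unfolding a_def by (simp add: algebra_simps)
  define l1 where "l1 = - ln (q * (1 - \<alpha>) / (\<alpha> * (1 - q)))"
  have l1_0: "0 \<le> l1"
  proof -
    have "q * (1 - \<alpha>) \<le> \<alpha> * (1 - q)" using qa by (simp add: algebra_simps)
    then have "q * (1 - \<alpha>) / (\<alpha> * (1 - q)) \<le> 1" using a0 assms(2) by (simp add: divide_le_eq)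
    moreover have "0 < q * (1 - \<alpha>) / (\<alpha> * (1 - q))" using a0 a1 assms(1,2) by simp
    ultimately show ?thesis unfolding l1_def by simp
  qed
  have B1eq: "exp (- l1 * \<alpha>) * (1 - q + q * exp l1) = exp (- D1)"
    using chernoff_id[OF a0 a1 assms(1,2)] unfolding l1_def D1_def by (simp add: algebra_simps)
  define l2 where "l2 = ln (sI * (1 - \<alpha>) / (\<alpha> * (1 - sI)))"
  have l2_0: "0 < l2"
  proof -
    have "\<alpha> * (1 - sI) < sI * (1 - \<alpha>)" using as by (simp add: algebra_simps)
    then have "1 < sI * (1 - \<alpha>) / (\<alpha> * (1 - sI))" using a0 s1 by (simp add: less_divide_eq)
    then show ?thesis unfolding l2_def by simp
  qed
  define h where "h = (\<lambda>s. exp (l2 * \<alpha>) * (s * exp (- l2) + 1 - s))"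
  have hI: "h sI = exp (- D2)"
    using chernoff_id[OF a0 a1 s0 s1] unfolding h_def l2_def D2_def by simp
  define e2 where "e2 = exp (- l2)"
  have e2b: "0 < 1 - e2" unfolding e2_def using l2_0 by simp
  have hlin: "\<And>s. h s = exp (l2 * \<alpha>) * (1 - s * (1 - e2))" unfolding h_def e2_def by (simp add: algebra_simps)
  have hanti: "\<And>s t. s \<le> t \<Longrightarrow> h t \<le> h s"
  proof -
    fix s t :: real assume "s \<le> t"
    then have "s * (1 - e2) \<le> t * (1 - e2)" using e2b by (intro mult_right_mono) auto
    then show "h t \<le> h s" unfolding hlin by (intro mult_left_mono) auto
  qed
  define D3 where "D3 = (D2 + 1 / (c * (1 - \<theta>) * d)) / 2"
  have th2': "1 / (c * (1 - \<theta>) * d) < D2"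
  proof -
    have "0 < c * (1 - \<theta>) * d" using c0 assms(4) d0 by simp
    moreover have "1 < D2 * (c * (1 - \<theta>) * d)" using th2 by (simp add: algebra_simps)
    ultimately show ?thesis by (simp add: divide_less_eq)
  qed
  have D3b: "D3 < D2" unfolding D3_def using th2' by simp
  have D3a: "1 < c * ((1 - \<theta>) * (d * D3))"
  proof -
    have pos: "0 < c * (1 - \<theta>) * d" using c0 assms(4) d0 by simp
    have "1 / (c * (1 - \<theta>) * d) < D3" unfolding D3_def using th2' by simp
    then have "1 < D3 * (c * (1 - \<theta>) * d)" using pos by (simp add: divide_less_eq)
    then show ?thesis by (simp add: algebra_simps)
  qed
  define b where "b = c * d * D3"
  have D3p: "0 < D3" unfolding D3_def using D2p c0 assms(4) d0 by (simp add: add_pos_pos)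
  have b_0: "0 \<le> b" unfolding b_def using c0 d0 D3p by simp
  have b_neg: "1 + (\<theta> - 1) * b < 0" using D3a unfolding b_def by (simp add: algebra_simps)
  define s' where "s' = (1 - exp (- D3) / exp (l2 * \<alpha>)) / (1 - e2)"
  have hs': "h s' = exp (- D3)"
  proof -
    have "s' * (1 - e2) = 1 - exp (- D3) / exp (l2 * \<alpha>)" unfolding s'_def using e2b by simp
    then show ?thesis unfolding hlin by simp
  qed
  have s'I: "s' < sI"
  proof (rule ccontr)
    assume "\<not> s' < sI"
    then have "h s' \<le> h sI" by (intro hanti) simp
    then have "exp (- D3) \<le> exp (- D2)" unfolding hs' hI .
    then show False using D3b by simp
  qed
  define \<pi>' where "\<pi>' = (s' - q) / (1 - q)"
  have \<pi>'d: "\<pi>' < exp (- d)"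
  proof -
    have "sI = q + exp (- d) * (1 - q)" unfolding sI_def by (simp add: algebra_simps)
    then have "s' - q < exp (- d) * (1 - q)" using s'I by simp
    then show ?thesis unfolding \<pi>'_def using assms(2) by (simp add: divide_less_eq)
  qed
  define d' where "d' = (if \<pi>' > 0 then - ln \<pi>' else d + 1)"
  have dd': "d < d'"
  proof (cases "\<pi>' > 0")
    case True
    then have "ln \<pi>' < ln (exp (- d))" using \<pi>'d by (subst ln_less_cancel_iff) auto
    then show ?thesis unfolding d'_def using True by simp
  qed (simp add: d'_def)
  have \<pi>'e: "\<pi>' \<le> exp (- d')"
  proof (cases "\<pi>' > 0")
    case True then show ?thesis unfolding d'_def by simp
  next
    case False
    have "0 < exp (- d')" by simp
    then show ?thesis using False by linarith
  qed
  have key_h: "\<And>\<pi>. exp (- d') \<le> \<pi> \<Longrightarrow> h (\<pi> + (1 - \<pi>) * q) \<le> exp (- D3)"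
  proof -
    fix \<pi> :: real assume "exp (- d') \<le> \<pi>"
    then have "\<pi>' \<le> \<pi>" using \<pi>'e by simp
    then have "\<pi>' * (1 - q) \<le> \<pi> * (1 - q)" using assms(2) by (intro mult_right_mono) auto
    moreover have "\<pi>' * (1 - q) = s' - q" unfolding \<pi>'_def using assms(2) by simp
    moreover have "\<pi> + (1 - \<pi>) * q = q + \<pi> * (1 - q)" by (simp add: algebra_simps)
    ultimately have "s' \<le> \<pi> + (1 - \<pi>) * q" by linarith
    then have "h (\<pi> + (1 - \<pi>) * q) \<le> h s'" by (rule hanti)
    then show "h (\<pi> + (1 - \<pi>) * q) \<le> exp (- D3)" unfolding hs' .
  qed
  define L0 where "L0 = max (max 1 (ln 2)) (max (2 / c + 1) (2 / ((d' - d) * c)))"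
  define K0 where "K0 = max (2 * d + 1) (4 * d' * (c * d + 1) / ((d' - d) * c))"
  have evb: "eventually (\<lambda>n. real n powr \<theta> / 2 \<le> real (k n) \<and> real (k n) \<le> 2 * real n powr \<theta> \<and> n \<ge> 1) at_top"
    by (rule asym_bounds[OF assms(6)])
  have evL: "eventually (\<lambda>n. L0 \<le> ln (real n / real (k n))) at_top"
    by (rule grow_L[OF evb assms(3,4)])
  have evK: "eventually (\<lambda>n. K0 \<le> real (k n)) at_top"
    by (rule grow_k[OF evb assms(3)])
  let ?L = "\<lambda>n. ln (real n / real (k n))"
  let ?S = "\<lambda>n. success_prob n (k n) (nat \<lceil>c * real (k n) * ln (real n / real (k n))\<rceil>)
                    (nat \<lceil>c * d * ln (real n / real (k n))\<rceil>) q \<alpha>"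
  have evmain: "eventually (\<lambda>n. 1 - (real (k n) * exp (- a * ?L n) + real n * exp (- b * ?L n)) \<le> ?S n) at_top"
    using evb evL evK
  proof eventually_elim
    case (elim n)
    define kk where "kk = k n"
    define L where "L = ?L n"
    define D where "D = nat \<lceil>c * d * L\<rceil>"
    define M where "M = nat \<lceil>c * real kk * L\<rceil>"
    have np: "0 < real n" using elim(1) by simp
    have kp: "0 < real kk" unfolding kk_def using elim(1) np
      by (smt (verit) powr_gt_zero divide_pos_pos)
    have LL0: "L0 \<le> L" using elim(2) unfolding L_def by simp
    have L1: "1 \<le> L" "ln 2 \<le> L" "2 / c < L" "2 / ((d' - d) * c) \<le> L"
      using LL0 unfolding L0_def by auto
    have KK: "2 * d + 1 \<le> real kk" "4 * d' * (c * d + 1) / ((d' - d) * c) \<le> real kk"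
      using elim(3) unfolding K0_def kk_def by auto
    have kn: "kk \<le> n"
    proof -
      have "exp (ln 2) \<le> exp L" using L1(2) by (subst exp_le_cancel_iff)
      then have "2 \<le> exp L" by simp
      moreover have "exp L = real n / real kk" unfolding L_def kk_def using np kp[unfolded kk_def] by simp
      ultimately have "2 \<le> real n / real kk" by simp
      then have "2 * real kk \<le> real n" using kp by (simp add: le_divide_eq)
      then show ?thesis using kp by simp
    qed
    have cdL: "0 \<le> c * d * L" using c0 d0 L1(1) by simp
    have ckL: "0 \<le> c * real kk * L" using c0 kp L1(1) by simp
    have Db: "c * d * L \<le> real D" "real D \<le> c * d * L + 1" unfolding D_def using nat_ceil_bounds[OF cdL] by auto
    have Mb: "c * real kk * L \<le> real M" unfolding M_def using nat_ceil_bounds[OF ckL] by auto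
    have nc: "2 * real D < real M" "real kk * real D / (real M - 2 * real D) \<le> d'"
      using numeric_cond[OF c0 d0 dd' L1(1) L1(3) L1(4) KK Db Mb] by auto
    have DM: "2 * D < M" using nc(1) by linarith
    have pil: "exp (- d') \<le> (1 - real D / real (M - D)) ^ kk"
      by (rule pi_lower[OF DM]) (use nc(2) in simp)
    define \<pi> where "\<pi> = (1 - real D / real (M - D)) ^ kk"
    define s where "s = \<pi> + (1 - \<pi>) * q"
    have fb: "1 - success_prob n kk M D q \<alpha>
        \<le> real kk * (exp (- l1 * \<alpha>) * (1 - q + q * exp l1)) ^ D + real n * (exp (l2 * \<alpha>) * (s * exp (- l2) + 1 - s)) ^ D"
      unfolding s_def \<pi>_def by (rule fail_bound[OF kn DM assms(1,2) l1_0 less_imp_le[OF l2_0]])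
    have t1: "(exp (- l1 * \<alpha>) * (1 - q + q * exp l1)) ^ D \<le> exp (- a * L)"
    proof -
      have "(exp (- l1 * \<alpha>) * (1 - q + q * exp l1)) ^ D = exp (real D * (- D1))"
        unfolding B1eq by (rule exp_of_nat_mult[symmetric])
      also have "\<dots> \<le> exp (- a * L)"
      proof -
        have "c * d * L * D1 \<le> real D * D1" using Db(1) D1p by (intro mult_right_mono) auto
        then show ?thesis unfolding a_def by (simp add: algebra_simps)
      qed
      finally show ?thesis .
    qed
    have t2: "(exp (l2 * \<alpha>) * (s * exp (- l2) + 1 - s)) ^ D \<le> exp (- b * L)"
    proof -
      have hs: "exp (l2 * \<alpha>) * (s * exp (- l2) + 1 - s) \<le> exp (- D3)"
        using key_h[OF pil] unfolding h_def s_def \<pi>_def .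
      have h0: "0 \<le> exp (l2 * \<alpha>) * (s * exp (- l2) + 1 - s)"
      proof -
        have "0 \<le> \<pi>" unfolding \<pi>_def using DM by (simp add: divide_le_eq)
        moreover have "\<pi> \<le> 1" unfolding \<pi>_def using DM by (intro power_le_one) (auto simp: divide_le_eq)
        ultimately have "s \<le> 1" unfolding s_def using assms(2)
          by (smt (verit) mult_left_le mult_nonneg_nonneg)
        moreover have "0 \<le> s * exp (- l2)" unfolding s_def using \<open>0 \<le> \<pi>\<close> \<open>\<pi> \<le> 1\<close> assms(1)
          by (intro mult_nonneg_nonneg add_nonneg_nonneg) auto
        ultimately show ?thesis by simp
      qed
      have "(exp (l2 * \<alpha>) * (s * exp (- l2) + 1 - s)) ^ D \<le> exp (- D3) ^ D"
        by (rule power_mono[OF hs h0])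
      also have "\<dots> = exp (real D * (- D3))" by (rule exp_of_nat_mult[symmetric])
      also have "\<dots> \<le> exp (- b * L)"
      proof -
        have "c * d * L * D3 \<le> real D * D3" using Db(1) D3p by (intro mult_right_mono) auto
        then show ?thesis unfolding b_def by (simp add: algebra_simps)
      qed
      finally show ?thesis .
    qed
    have "1 - (real kk * exp (- a * L) + real n * exp (- b * L)) \<le> 1 - success_prob n kk M D q \<alpha> - (1 - success_prob n kk M D q \<alpha>)
          + (1 - (real kk * (exp (- l1 * \<alpha>) * (1 - q + q * exp l1)) ^ D + real n * (exp (l2 * \<alpha>) * (s * exp (- l2) + 1 - s)) ^ D))"
    proof -
      have "real kk * (exp (- l1 * \<alpha>) * (1 - q + q * exp l1)) ^ D \<le> real kk * exp (- a * L)"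
        using t1 by (intro mult_left_mono) auto
      moreover have "real n * (exp (l2 * \<alpha>) * (s * exp (- l2) + 1 - s)) ^ D \<le> real n * exp (- b * L)"
        using t2 by (intro mult_left_mono) auto
      ultimately show ?thesis by simp
    qed
    then have "1 - (real kk * exp (- a * L) + real n * exp (- b * L)) \<le> success_prob n kk M D q \<alpha>"
      using fb by simp
    then show ?case unfolding kk_def L_def M_def D_def .
  qed
  have evup: "eventually (\<lambda>n. ?S n \<le> 1) at_top"
    by (simp add: success_prob_def)
  have lim: "((\<lambda>n. 1 - (real (k n) * exp (- a * ?L n) + real n * exp (- b * ?L n))) \<longlongrightarrow> 1 - (0 + 0)) at_top"
    by (intro tendsto_diff tendsto_const tendsto_add decay_lim(1)[OF evb a_0 a_neg] decay_lim(2)[OF evb b_0 b_neg])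
  have "(?S \<longlongrightarrow> 1) at_top"
    using tendsto_sandwich[OF evmain evup _ tendsto_const] lim by simp
  then show ?thesis using ad by blast
qed

end
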